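(* Let $A$ be a finitely generated associative $\mathbb{C}$-algebra which is NC-nilpotent, let $\pi:A\to A/M_2(A)$ be the quotient map, let $\bar S\subset A/M_2(A)$ be a finitely generated multiplicative set without zero divisors, and let $S=\pi^{-1}(\bar S)$. Then (1) $S$ satisfies the Ore condition; (2) the Ore localization $A[S^{-1}]$ is finitely generated; (3) $A[S^{-1}]$ is NC-nilpotent.
   Context: $L_1=A$, $L_k=[A,L_{k-1}]$, $M_k=AL_kA$. An algebra is NC-nilpotent if its NC-filtration $F_k=\sum_{m\ge1}\sum_{i_1+\cdots+i_m=k+m}M_{i_1}\cdots M_{i_m}$ satisfies $F_N=0$ for some $N$; for finitely generated algebras this is equivalent to $M_N=0$ for some $N$. *)

theory Defs
  imports "HOL-Algebra.Algebra"
begin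

definition C_ring :: "complex ring" where
  "C_ring = \<lparr>carrier = UNIV, monoid.mult = (*), monoid.one = 1, ring.zero = 0, ring.add = (+)\<rparr>"

definition cx_algebra :: "(complex, 'a) module \<Rightarrow> bool" where
  "cx_algebra A \<longleftrightarrow> ring A \<and> module C_ring A \<and>
     (\<forall>c x y. x \<in> carrier A \<longrightarrow> y \<in> carrier A \<longrightarrow>
        (smult A c x) \<otimes>\<^bsub>A\<^esub> y = smult A c (x \<otimes>\<^bsub>A\<^esub> y) \<and>
        x \<otimes>\<^bsub>A\<^esub> (smult A c y) = smult A c (x \<otimes>\<^bsub>A\<^esub> y))"

definition cspan :: "(complex, 'a) module \<Rightarrow> 'a set \<Rightarrow> 'a set" where
  "cspan A Y = {z. \<forall>V. (Y \<subseteq> V \<and> V \<subseteq> carrier A \<and> \<zero>\<^bsub>A\<^esub> \<in> V \<and>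
      (\<forall>x\<in>V. \<forall>y\<in>V. x \<oplus>\<^bsub>A\<^esub> y \<in> V) \<and> (\<forall>c x. x \<in> V \<longrightarrow> smult A c x \<in> V))
      \<longrightarrow> z \<in> V}"

definition lprod :: "('a, 'b) monoid_scheme \<Rightarrow> 'a list \<Rightarrow> 'a" where
  "lprod R xs = foldr (monoid.mult R) xs (monoid.one R)"

definition comm :: "(complex, 'a) module \<Rightarrow> 'a \<Rightarrow> 'a \<Rightarrow> 'a" where
  "comm A x y = x \<otimes>\<^bsub>A\<^esub> y \<ominus>\<^bsub>A\<^esub> y \<otimes>\<^bsub>A\<^esub> x"

text \<open>The value at 0 is an irrelevant dummy.\<close>
fun Lc :: "(complex, 'a) module \<Rightarrow> nat \<Rightarrow> 'a set" where
  "Lc A 0 = carrier A"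
| "Lc A (Suc 0) = carrier A"
| "Lc A (Suc (Suc k)) =
     cspan A {comm A a l | a l. a \<in> carrier A \<and> l \<in> Lc A (Suc k)}"

definition Mc :: "(complex, 'a) module \<Rightarrow> nat \<Rightarrow> 'a set" where
  "Mc A k = cspan A {a \<otimes>\<^bsub>A\<^esub> l \<otimes>\<^bsub>A\<^esub> b | a l b.
                        a \<in> carrier A \<and> l \<in> Lc A k \<and> b \<in> carrier A}"

definition NCF :: "(complex, 'a) module \<Rightarrow> nat \<Rightarrow> 'a set" where
  "NCF A k = cspan A {lprod A xs | xs. xs \<noteq> [] \<and>
      (\<exists>is. length is = length xs \<and> sum_list is = k + length xs \<and>
         (\<forall>j < length xs. 1 \<le> is ! j \<and> xs ! j \<in> Mc A (is ! j)))}"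

definition nc_nilpotent :: "(complex, 'a) module \<Rightarrow> bool" where
  "nc_nilpotent A \<longleftrightarrow> (\<exists>N. NCF A N = {\<zero>\<^bsub>A\<^esub>})"

definition fg_algebra :: "(complex, 'a) module \<Rightarrow> bool" where
  "fg_algebra A \<longleftrightarrow> (\<exists>G. finite G \<and> G \<subseteq> carrier A \<and>
      carrier A = cspan A {lprod A xs | xs. set xs \<subseteq> G})"

definition fg_mult_set :: "('a, 'b) ring_scheme \<Rightarrow> 'a set \<Rightarrow> bool" where
  "fg_mult_set R T \<longleftrightarrow> (\<exists>G. finite G \<and> G \<subseteq> carrier R \<and>
      T = {lprod R xs | xs. set xs \<subseteq> G})"

definition no_zero_divisors_in :: "('a, 'b) ring_scheme \<Rightarrow> 'a set \<Rightarrow> bool" where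
  "no_zero_divisors_in R T \<longleftrightarrow> (\<forall>s\<in>T. \<forall>x\<in>carrier R.
      (s \<otimes>\<^bsub>R\<^esub> x = \<zero>\<^bsub>R\<^esub> \<or> x \<otimes>\<^bsub>R\<^esub> s = \<zero>\<^bsub>R\<^esub>) \<longrightarrow> x = \<zero>\<^bsub>R\<^esub>)"

definition right_ore :: "(complex, 'a) module \<Rightarrow> 'a set \<Rightarrow> bool" where
  "right_ore A S \<longleftrightarrow> (\<forall>a\<in>carrier A. \<forall>s\<in>S. \<exists>t\<in>S. \<exists>b\<in>carrier A.
      a \<otimes>\<^bsub>A\<^esub> t = s \<otimes>\<^bsub>A\<^esub> b)"

definition ore_localization ::
  "(complex, 'a) module \<Rightarrow> 'a set \<Rightarrow> (complex, 'b) module \<Rightarrow> ('a \<Rightarrow> 'b) \<Rightarrow> bool" where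
  "ore_localization A S B \<phi> \<longleftrightarrow> cx_algebra B \<and> \<phi> \<in> ring_hom A B \<and>
     (\<forall>c. \<forall>x\<in>carrier A. \<phi> (smult A c x) = smult B c (\<phi> x)) \<and>
     (\<forall>s\<in>S. \<phi> s \<in> Units B) \<and>
     (\<forall>y\<in>carrier B. \<exists>a\<in>carrier A. \<exists>s\<in>S. y = \<phi> a \<otimes>\<^bsub>B\<^esub> inv\<^bsub>B\<^esub> (\<phi> s)) \<and>
     (\<forall>a\<in>carrier A. \<phi> a = \<zero>\<^bsub>B\<^esub> \<longleftrightarrow> (\<exists>s\<in>S. a \<otimes>\<^bsub>A\<^esub> s = \<zero>\<^bsub>A\<^esub>))"

end

theory Submission
  imports Defs
begin


lemma C_simps[simp]: "carrier C_ring = UNIV" "ring.add C_ring = (+)" "monoid.mult C_ring = (*)" "monoid.one C_ring = 1"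
  "ring.zero C_ring = 0" by (simp_all add: C_ring_def)

fun geo :: "('a,'b) ring_scheme \<Rightarrow> 'a \<Rightarrow> nat \<Rightarrow> 'a" where
  "geo R q 0 = \<zero>\<^bsub>R\<^esub>" | "geo R q (Suc n) = \<one>\<^bsub>R\<^esub> \<oplus>\<^bsub>R\<^esub> q \<otimes>\<^bsub>R\<^esub> geo R q n"

lemma lprod_closed_m: "monoid M \<Longrightarrow> set xs \<subseteq> carrier M \<Longrightarrow> lprod M xs \<in> carrier M"
  by (induction xs) (auto simp: lprod_def monoid.m_closed)

lemma lprod_append_m: "monoid M \<Longrightarrow> set xs \<subseteq> carrier M \<Longrightarrow> set ys \<subseteq> carrier M \<Longrightarrow>
   lprod M (xs @ ys) = lprod M xs \<otimes>\<^bsub>M\<^esub> lprod M ys"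
proof (induction xs)
  case Nil then show ?case using lprod_closed_m[of M ys] by (simp add: lprod_def)
next
  case (Cons x xs)
  then show ?case using lprod_closed_m[of M xs] lprod_closed_m[of M ys]
    by (simp add: lprod_def monoid.m_assoc)
qed

lemma lprod_hom: assumes "h \<in> ring_hom R T" "monoid R" shows "set xs \<subseteq> carrier R \<Longrightarrow> h (lprod R xs) = lprod T (map h xs)"
proof (induction xs)
  case Nil then show ?case using ring_hom_one[OF assms(1)] by (simp add: lprod_def)
next
  case (Cons x xs)
  have "h (lprod R (x # xs)) = h x \<otimes>\<^bsub>T\<^esub> h (lprod R xs)"
    using ring_hom_mult[OF assms(1)] Cons lprod_closed_m[OF assms(2), of xs] by (simp add: lprod_def)
  then show ?case using Cons by (simp add: lprod_def)
qed

locale cxa = ring A for A :: "(complex,'a) module" (structure) +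
  assumes cxA: "cx_algebra A"
begin

lemma modA: "module C_ring A" using cxA unfolding cx_algebra_def by auto
lemma sm_closed[simp]: "x \<in> carrier A \<Longrightarrow> c \<odot>\<^bsub>A\<^esub> x \<in> carrier A"
  using module.smult_closed[OF modA] by simp
lemma sm_l: "x \<in> carrier A \<Longrightarrow> y \<in> carrier A \<Longrightarrow> (c \<odot>\<^bsub>A\<^esub> x) \<otimes> y = c \<odot>\<^bsub>A\<^esub> (x \<otimes> y)"
  using cxA unfolding cx_algebra_def by auto
lemma sm_r: "x \<in> carrier A \<Longrightarrow> y \<in> carrier A \<Longrightarrow> x \<otimes> (c \<odot>\<^bsub>A\<^esub> y) = c \<odot>\<^bsub>A\<^esub> (x \<otimes> y)"
  using cxA unfolding cx_algebra_def by auto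
lemma sm_add: "x \<in> carrier A \<Longrightarrow> y \<in> carrier A \<Longrightarrow> c \<odot>\<^bsub>A\<^esub> (x \<oplus> y) = c \<odot>\<^bsub>A\<^esub> x \<oplus> c \<odot>\<^bsub>A\<^esub> y"
  using module.smult_r_distr[OF modA] by simp
lemma sm_zero: "c \<odot>\<^bsub>A\<^esub> \<zero> = \<zero>"
  using module.smult_r_null[OF modA] by simp
lemma sm_neg: "x \<in> carrier A \<Longrightarrow> \<ominus> x = (\<ominus>\<^bsub>C_ring\<^esub> 1) \<odot>\<^bsub>A\<^esub> x"
  using module.smult_l_minus[OF modA, of 1 x] module.smult_one[OF modA, of x] by simp
lemma sm_minus: "x \<in> carrier A \<Longrightarrow> y \<in> carrier A \<Longrightarrow> c \<odot>\<^bsub>A\<^esub> (x \<ominus> y) = c \<odot>\<^bsub>A\<^esub> x \<ominus> c \<odot>\<^bsub>A\<^esub> y"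
  using module.smult_r_minus[OF modA, of c y] sm_add by (simp add: minus_eq)

definition subsp :: "'a set \<Rightarrow> bool" where
  "subsp V \<longleftrightarrow> V \<subseteq> carrier A \<and> \<zero> \<in> V \<and> (\<forall>x\<in>V. \<forall>y\<in>V. x \<oplus> y \<in> V) \<and> (\<forall>c x. x \<in> V \<longrightarrow> c \<odot>\<^bsub>A\<^esub> x \<in> V)"

lemma subspD: assumes "subsp V"
  shows "V \<subseteq> carrier A" "\<zero> \<in> V" "x \<in> V \<Longrightarrow> y \<in> V \<Longrightarrow> x \<oplus> y \<in> V" "x \<in> V \<Longrightarrow> c \<odot>\<^bsub>A\<^esub> x \<in> V"
    "x \<in> V \<Longrightarrow> \<ominus> x \<in> V" "x \<in> V \<Longrightarrow> y \<in> V \<Longrightarrow> x \<ominus> y \<in> V"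
proof -
  show "V \<subseteq> carrier A" "\<zero> \<in> V" "x \<in> V \<Longrightarrow> y \<in> V \<Longrightarrow> x \<oplus> y \<in> V" "x \<in> V \<Longrightarrow> c \<odot>\<^bsub>A\<^esub> x \<in> V"
    using assms unfolding subsp_def by auto
  show neg: "x \<in> V \<Longrightarrow> \<ominus> x \<in> V" for x using assms sm_neg unfolding subsp_def by (metis subsetD)
  show "x \<in> V \<Longrightarrow> y \<in> V \<Longrightarrow> x \<ominus> y \<in> V" using neg assms unfolding subsp_def minus_eq by blast
qed

lemma subsp_carrier: "subsp (carrier A)" unfolding subsp_def by auto

lemma cspan_least: "Y \<subseteq> V \<Longrightarrow> subsp V \<Longrightarrow> cspan A Y \<subseteq> V"
  unfolding cspan_def subsp_def by blast

lemma cspan_sub: "Y \<subseteq> carrier A \<Longrightarrow> cspan A Y \<subseteq> carrier A"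
  using cspan_least subsp_carrier by blast

lemma cspan_inc: "Y \<subseteq> cspan A Y"
  unfolding cspan_def by blast

lemma cspan_subsp: assumes "Y \<subseteq> carrier A" shows "subsp (cspan A Y)"
  using cspan_sub[OF assms] unfolding subsp_def cspan_def by auto

lemma cspan_induct: assumes "x \<in> cspan A Y" "Y \<subseteq> carrier A" "subsp {z \<in> carrier A. P z}" "\<And>y. y \<in> Y \<Longrightarrow> P y"
  shows "P x"
proof -
  have "Y \<subseteq> {z \<in> carrier A. P z}" using assms by auto
  then show ?thesis using cspan_least[OF _ assms(3)] assms(1) by auto
qed

lemma span_bilin: assumes "Y \<subseteq> carrier A" "Z \<subseteq> carrier A" "subsp W" "\<And>y z. y \<in> Y \<Longrightarrow> z \<in> Z \<Longrightarrow> y \<otimes> z \<in> W"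
  and "y \<in> cspan A Y" "z \<in> cspan A Z"
  shows "y \<otimes> z \<in> W"
proof -
  note W = subspD[OF assms(3)]
  have step: "\<forall>z \<in> cspan A Z. y \<otimes> z \<in> W" if "y \<in> carrier A" "\<And>z. z \<in> Z \<Longrightarrow> y \<otimes> z \<in> W" for y
  proof
    fix z assume z: "z \<in> cspan A Z"
    have "subsp {z \<in> carrier A. y \<otimes> z \<in> W}"
      unfolding subsp_def using that W by (auto simp: r_distr sm_r)
    then show "y \<otimes> z \<in> W" using cspan_induct[OF z assms(2), of "\<lambda>z. y \<otimes> z \<in> W"] that by auto
  qed
  have "subsp {y \<in> carrier A. \<forall>z \<in> cspan A Z. y \<otimes> z \<in> W}"
    unfolding subsp_def using W cspan_sub[OF assms(2)] by (auto simp: l_distr sm_l)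
  then have "\<forall>z \<in> cspan A Z. y \<otimes> z \<in> W"
    by (rule cspan_induct[OF assms(5) assms(1)]) (use step assms(1,4) in blast)
  then show ?thesis using assms(6) by auto
qed

lemma comm_closed[simp]: "x \<in> carrier A \<Longrightarrow> y \<in> carrier A \<Longrightarrow> comm A x y \<in> carrier A"
  unfolding comm_def by simp

lemma comm_add: "a \<in> carrier A \<Longrightarrow> x \<in> carrier A \<Longrightarrow> y \<in> carrier A \<Longrightarrow> comm A a (x \<oplus> y) = comm A a x \<oplus> comm A a y"
  unfolding comm_def by (simp add: r_distr l_distr) algebra

lemma comm_sm: "a \<in> carrier A \<Longrightarrow> x \<in> carrier A \<Longrightarrow> comm A a (c \<odot>\<^bsub>A\<^esub> x) = c \<odot>\<^bsub>A\<^esub> comm A a x"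
  unfolding comm_def by (simp add: sm_l sm_r sm_minus)

lemma span_comm: assumes "Y \<subseteq> carrier A" "subsp W" "a \<in> carrier A" "\<And>y. y \<in> Y \<Longrightarrow> comm A a y \<in> W"
  and "x \<in> cspan A Y" shows "comm A a x \<in> W"
proof -
  note W = subspD[OF assms(2)]
  have "subsp {z \<in> carrier A. comm A a z \<in> W}"
    unfolding subsp_def using W assms(3) by (auto simp: comm_add comm_sm) (simp add: comm_def)
  then show ?thesis by (rule cspan_induct[OF assms(5,1)]) (use assms(4) in auto)
qed

lemma Lc_sub_aux: "Lc A k \<subseteq> carrier A \<and> Lc A (Suc k) \<subseteq> carrier A"
proof (induction k)
  case 0 then show ?case by simp
next
  case (Suc k)
  have "{comm A a l | a l. a \<in> carrier A \<and> l \<in> Lc A (Suc k)} \<subseteq> carrier A" using Suc by auto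
  then show ?case using Suc cspan_sub by simp
qed

lemma Lc_sub: "Lc A k \<subseteq> carrier A" using Lc_sub_aux by blast

lemma comm_Lc: "a \<in> carrier A \<Longrightarrow> l \<in> Lc A (Suc k) \<Longrightarrow> comm A a l \<in> Lc A (Suc (Suc k))"
  using cspan_inc by fastforce

lemma Mgen_sub: "{a \<otimes> l \<otimes> b | a l b. a \<in> carrier A \<and> l \<in> Lc A k \<and> b \<in> carrier A} \<subseteq> carrier A"
  using Lc_sub by auto

lemma Mc_gen: "u \<in> carrier A \<Longrightarrow> l \<in> Lc A k \<Longrightarrow> v \<in> carrier A \<Longrightarrow> u \<otimes> l \<otimes> v \<in> Mc A k"
  unfolding Mc_def using cspan_inc by fastforce

lemma Mc_sub: "Mc A k \<subseteq> carrier A" unfolding Mc_def using cspan_sub[OF Mgen_sub] .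
lemma Mc_subsp: "subsp (Mc A k)" unfolding Mc_def using cspan_subsp[OF Mgen_sub] .

lemma Lc_Mc: assumes "l \<in> Lc A k" shows "l \<in> Mc A k"
proof -
  have "l \<in> carrier A" using assms Lc_sub by auto
  then show ?thesis using Mc_gen[where u=\<one> and l=l and v=\<one> and k=k] assms by simp
qed

lemma set_Mc: assumes "\<forall>j<length xs. xs ! j \<in> Mc A (f j)" shows "set xs \<subseteq> carrier A"
proof
  fix x assume "x \<in> set xs"
  then obtain j where "j < length xs" "x = xs ! j" by (auto simp: in_set_conv_nth)
  then show "x \<in> carrier A" using assms Mc_sub by blast
qed

lemma lprod_Nil[simp]: "lprod A [] = \<one>" by (simp add: lprod_def)
lemma lprod_Cons[simp]: "lprod A (x # xs) = x \<otimes> lprod A xs" by (simp add: lprod_def)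
lemma lprod_closed[simp]: "set xs \<subseteq> carrier A \<Longrightarrow> lprod A xs \<in> carrier A"
  by (induction xs) auto
lemma lprod_append: "set xs \<subseteq> carrier A \<Longrightarrow> set ys \<subseteq> carrier A \<Longrightarrow> lprod A (xs @ ys) = lprod A xs \<otimes> lprod A ys"
  by (induction xs) (auto simp: m_assoc)

definition NCgen :: "nat \<Rightarrow> 'a set" where
  "NCgen k = {lprod A xs | xs. xs \<noteq> [] \<and>
      (\<exists>is. length is = length xs \<and> sum_list is = k + length xs \<and>
         (\<forall>j < length xs. 1 \<le> is ! j \<and> xs ! j \<in> Mc A (is ! j)))}"

lemma NCF_eq: "NCF A k = cspan A (NCgen k)" unfolding NCF_def NCgen_def ..

lemma NCgen_sub: "NCgen k \<subseteq> carrier A"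
proof
  fix x assume "x \<in> NCgen k"
  then obtain xs ns where "x = lprod A xs" "length ns = length xs" "\<forall>j < length xs. xs ! j \<in> Mc A (ns ! j)"
    unfolding NCgen_def by auto
  then have "set xs \<subseteq> carrier A" using set_Mc by blast
  then show "x \<in> carrier A" using \<open>x = lprod A xs\<close> by simp
qed

lemma NCF_sub: "NCF A k \<subseteq> carrier A" unfolding NCF_eq using cspan_sub[OF NCgen_sub] .
lemma NCF_subsp: "subsp (NCF A k)" unfolding NCF_eq using cspan_subsp[OF NCgen_sub] .

lemma sum_list_ge_length: "\<forall>j < length ns. 1 \<le> ns ! j \<Longrightarrow> length ns \<le> sum_list (ns::nat list)"
proof (induction ns)
  case Nil then show ?case by simp
next
  case (Cons i ns)
  have "1 \<le> i" using Cons.prems by force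
  moreover have "\<forall>j < length ns. 1 \<le> ns ! j" using Cons.prems by force
  ultimately show ?case using Cons.IH by simp
qed

lemma one_Mc1: "x \<in> carrier A \<Longrightarrow> x \<in> Mc A (Suc 0)"
  using Mc_gen[where u=\<one> and l=x and v=\<one> and k="Suc 0"] by simp

lemma lprod_F: assumes "length is = length xs" "sum_list is = k + length xs"
  "\<forall>j < length xs. 1 \<le> is ! j \<and> xs ! j \<in> Mc A (is ! j)"
  shows "lprod A xs \<in> NCF A k"
proof (cases "xs = []")
  case True
  then have k: "k = 0" using assms by simp
  have "lprod A [\<one>] \<in> NCgen 0" unfolding NCgen_def
    by (rule CollectI, rule exI[of _ "[\<one>]"]) (auto intro!: exI[of _ "[1]"] one_Mc1)
  then show ?thesis using True k cspan_inc unfolding NCF_eq by fastforce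
next
  case False
  then have "lprod A xs \<in> NCgen k" unfolding NCgen_def using assms by blast
  then show ?thesis using cspan_inc unfolding NCF_eq by blast
qed

lemma M_F: assumes "x \<in> Mc A (Suc k)" shows "x \<in> NCF A k"
proof -
  have "x \<in> carrier A" using assms Mc_sub by auto
  then have "lprod A [x] = x" by simp
  moreover have "lprod A [x] \<in> NCF A k" by (rule lprod_F[of "[Suc k]"]) (use assms in auto)
  ultimately show ?thesis by simp
qed

lemma carrier_F0: "x \<in> carrier A \<Longrightarrow> x \<in> NCF A 0"
  using M_F[of x 0] one_Mc1 by simp

lemma F_mul: assumes "x \<in> NCF A k" "y \<in> NCF A l" shows "x \<otimes> y \<in> NCF A (k + l)"
proof (rule span_bilin[OF NCgen_sub NCgen_sub NCF_subsp _ assms[unfolded NCF_eq]])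
  fix u v assume "u \<in> NCgen k" "v \<in> NCgen l"
  then obtain xs ns ys js where u: "u = lprod A xs" "length ns = length xs" "sum_list ns = k + length xs"
      "\<forall>j < length xs. 1 \<le> ns ! j \<and> xs ! j \<in> Mc A (ns ! j)"
    and v: "v = lprod A ys" "length js = length ys" "sum_list js = l + length ys"
      "\<forall>j < length ys. 1 \<le> js ! j \<and> ys ! j \<in> Mc A (js ! j)"
    unfolding NCgen_def by blast
  have "\<forall>j<length xs. xs ! j \<in> Mc A (ns ! j)" "\<forall>j<length ys. ys ! j \<in> Mc A (js ! j)" using u(4) v(4) by auto
  then have cx: "set xs \<subseteq> carrier A" "set ys \<subseteq> carrier A" using set_Mc by blast+
  have "lprod A (xs @ ys) \<in> NCF A (k + l)"
    by (rule lprod_F[of "ns @ js"]) (use u v in \<open>auto simp: nth_append\<close>)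
  then show "u \<otimes> v \<in> NCF A (k + l)" using lprod_append cx u v by simp
qed

lemma F_ideal: "x \<in> NCF A k \<Longrightarrow> a \<in> carrier A \<Longrightarrow> a \<otimes> x \<in> NCF A k \<and> x \<otimes> a \<in> NCF A k"
proof -
  assume h: "x \<in> NCF A k" "a \<in> carrier A"
  have "a \<otimes> x \<in> NCF A (0 + k)" by (rule F_mul[OF carrier_F0[OF h(2)] h(1)])
  moreover have "x \<otimes> a \<in> NCF A (k + 0)" by (rule F_mul[OF h(1) carrier_F0[OF h(2)]])
  ultimately show ?thesis by simp
qed

lemma comm_mul: "a \<in> carrier A \<Longrightarrow> x \<in> carrier A \<Longrightarrow> y \<in> carrier A \<Longrightarrow>
   comm A a (x \<otimes> y) = comm A a x \<otimes> y \<oplus> x \<otimes> comm A a y"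
  unfolding comm_def by (simp add: r_distr l_distr minus_eq l_minus r_minus m_assoc) algebra

lemma comm_M: assumes "a \<in> carrier A" "1 \<le> i" "x \<in> Mc A i" shows "comm A a x \<in> NCF A i"
proof (rule span_comm[OF Mgen_sub NCF_subsp assms(1) _ assms(3)[unfolded Mc_def]])
  fix y assume "y \<in> {a \<otimes> l \<otimes> b | a l b. a \<in> carrier A \<and> l \<in> Lc A i \<and> b \<in> carrier A}"
  then obtain u l v where y: "y = u \<otimes> l \<otimes> v" "u \<in> carrier A" "l \<in> Lc A i" "v \<in> carrier A" by blast
  have lc: "l \<in> carrier A" using y Lc_sub by auto
  obtain i' where i': "i = Suc i'" using assms(2) by (cases i) auto
  have c2: "comm A a z \<in> NCF A 1" if "z \<in> carrier A" for z
  proof -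
    have "comm A a z \<in> Lc A 2" using comm_Lc[of a z 0] that assms(1) by (simp add: numeral_2_eq_2)
    then show ?thesis using M_F[of _ 1] Lc_Mc by (simp add: numeral_2_eq_2)
  qed
  have t1: "comm A a u \<otimes> (l \<otimes> v) \<in> NCF A i"
  proof -
    have "l \<otimes> v \<in> NCF A i'" using M_F Mc_gen[where u=\<one> and l=l and v=v and k=i] y lc i' by simp
    then show ?thesis using F_mul[OF c2[OF y(2)]] i' by simp
  qed
  have t2: "u \<otimes> comm A a l \<otimes> v \<in> NCF A i"
    using M_F Mc_gen[where u=u and l="comm A a l" and v=v and k="Suc i"] comm_Lc[of a l i'] y assms(1) i' by simp
  have t3: "(u \<otimes> l) \<otimes> comm A a v \<in> NCF A i"
  proof -
    have "u \<otimes> l \<in> NCF A i'" using M_F Mc_gen[where u=u and l=l and v=\<one> and k=i] y lc i' by simp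
    then show ?thesis using F_mul[OF _ c2[OF y(4)]] i' by simp
  qed
  have "comm A a y = comm A a u \<otimes> (l \<otimes> v) \<oplus> (u \<otimes> comm A a l \<otimes> v \<oplus> (u \<otimes> l) \<otimes> comm A a v)"
    using y lc assms(1) by (simp add: comm_mul m_assoc r_distr l_distr)
  then show "comm A a y \<in> NCF A i" using t1 t2 t3 subspD[OF NCF_subsp] by simp
qed

lemma comm_one: "a \<in> carrier A \<Longrightarrow> comm A a \<one> = \<zero>"
  unfolding comm_def by simp

lemma comm_lprod: assumes a: "a \<in> carrier A"
  shows "\<forall>ns k. length ns = length xs \<and> sum_list ns = k + length xs \<and>
     (\<forall>j < length xs. 1 \<le> ns ! j \<and> xs ! j \<in> Mc A (ns ! j)) \<longrightarrow> comm A a (lprod A xs) \<in> NCF A (Suc k)"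
proof (induction xs)
  case Nil
  then show ?case using comm_one[OF a] subspD(2)[OF NCF_subsp] by simp
next
  case (Cons x xs)
  show ?case
  proof (intro allI impI)
    fix ns k assume h: "length ns = length (x # xs) \<and> sum_list ns = k + length (x # xs) \<and>
       (\<forall>j < length (x # xs). 1 \<le> ns ! j \<and> (x # xs) ! j \<in> Mc A (ns ! j))"
    obtain i ms where ns: "ns = i # ms" using h by (cases ns) auto
    have hi: "1 \<le> i" "x \<in> Mc A i" using h ns by force+
    have hm: "length ms = length xs" "\<forall>j < length xs. 1 \<le> ms ! j \<and> xs ! j \<in> Mc A (ms ! j)"
      using h ns by force+
    have ge: "length xs \<le> sum_list ms" using sum_list_ge_length[of ms] hm by auto
    define k' where "k' = sum_list ms - length xs"
    have sk: "sum_list ms = k' + length xs" using ge k'_def by simp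
    have ik: "i + k' = Suc k" using h ns sk by simp
    obtain i' where i': "i = Suc i'" using hi by (cases i) auto
    have xs_c: "set xs \<subseteq> carrier A" using hm(2) set_Mc[of xs "\<lambda>j. ms ! j"] by auto
    have xc: "x \<in> carrier A" using hi Mc_sub by auto
    have L: "lprod A xs \<in> NCF A k'" using lprod_F[of ms xs k'] hm sk by auto
    have IH: "comm A a (lprod A xs) \<in> NCF A (Suc k')" using Cons.IH hm sk by blast
    have t1: "comm A a x \<otimes> lprod A xs \<in> NCF A (Suc k)"
      using F_mul[OF comm_M[OF a hi] L] ik by simp
    have t2: "x \<otimes> comm A a (lprod A xs) \<in> NCF A (Suc k)"
      using F_mul[OF M_F[of x i'] IH] hi i' ik by simp
    have "comm A a (lprod A (x # xs)) = comm A a x \<otimes> lprod A xs \<oplus> x \<otimes> comm A a (lprod A xs)"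
      using comm_mul[OF a xc lprod_closed[OF xs_c]] by simp
    then show "comm A a (lprod A (x # xs)) \<in> NCF A (Suc k)" using t1 t2 subspD(3)[OF NCF_subsp] by simp
  qed
qed

lemma comm_F: assumes "a \<in> carrier A" "x \<in> NCF A k" shows "comm A a x \<in> NCF A (Suc k)"
proof (rule span_comm[OF NCgen_sub NCF_subsp assms(1) _ assms(2)[unfolded NCF_eq]])
  fix y assume "y \<in> NCgen k"
  then obtain xs ns where "y = lprod A xs" "length ns = length xs" "sum_list ns = k + length xs"
      "\<forall>j < length xs. 1 \<le> ns ! j \<and> xs ! j \<in> Mc A (ns ! j)" unfolding NCgen_def by blast
  then show "comm A a y \<in> NCF A (Suc k)" using comm_lprod[OF assms(1), of xs] by blast
qed

lemma comm_F1: "a \<in> carrier A \<Longrightarrow> b \<in> carrier A \<Longrightarrow> comm A a b \<in> NCF A 1"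
  using comm_F[OF _ carrier_F0] by simp

lemma M2_F1: "x \<in> Mc A 2 \<Longrightarrow> x \<in> NCF A 1"
  using M_F[of x 1] by (simp add: numeral_2_eq_2)

lemma ad_Lc: "t \<in> carrier A \<Longrightarrow> x \<in> carrier A \<Longrightarrow> ((comm A t) ^^ k) x \<in> Lc A (Suc k)"
proof (induction k)
  case 0 then show ?case by simp
next
  case (Suc k) then show ?case using comm_Lc by simp
qed

lemma ad_F: "t \<in> carrier A \<Longrightarrow> x \<in> carrier A \<Longrightarrow> ((comm A t) ^^ k) x \<in> NCF A k"
  using ad_Lc M_F Lc_Mc by blast

lemma ad_closed: "t \<in> carrier A \<Longrightarrow> x \<in> carrier A \<Longrightarrow> ((comm A t) ^^ k) x \<in> carrier A"
  by (induction k) auto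

lemma NCF_le: assumes sub: "\<And>k. subsp (G k)" and G0: "carrier A \<subseteq> G 0"
  and Gm: "\<And>k l x y. x \<in> G k \<Longrightarrow> y \<in> G l \<Longrightarrow> x \<otimes> y \<in> G (k + l)"
  and Gc: "\<And>k y z. y \<in> carrier A \<Longrightarrow> z \<in> G k \<Longrightarrow> comm A y z \<in> G (Suc k)"
  shows "NCF A k \<subseteq> G k"
proof -
  have L: "Lc A (Suc k) \<subseteq> G k" for k
  proof (induction k)
    case 0 then show ?case using G0 by simp
  next
    case (Suc k)
    have "{comm A a l | a l. a \<in> carrier A \<and> l \<in> Lc A (Suc k)} \<subseteq> G (Suc k)" using Suc Gc by blast
    then show ?case using cspan_least[OF _ sub] by simp
  qed
  have M: "Mc A (Suc k) \<subseteq> G k" for k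
  proof -
    have "{a \<otimes> l \<otimes> b | a l b. a \<in> carrier A \<and> l \<in> Lc A (Suc k) \<and> b \<in> carrier A} \<subseteq> G k"
    proof (rule subsetI)
      fix x assume "x \<in> {a \<otimes> l \<otimes> b | a l b. a \<in> carrier A \<and> l \<in> Lc A (Suc k) \<and> b \<in> carrier A}"
      then obtain a l b where x: "x = a \<otimes> l \<otimes> b" "a \<in> carrier A" "l \<in> Lc A (Suc k)" "b \<in> carrier A" by blast
      have "a \<otimes> l \<in> G (0 + k)" using Gm[of a 0 l k] x G0 L by auto
      then have "a \<otimes> l \<otimes> b \<in> G (k + 0)" using Gm[of "a \<otimes> l" k b 0] x G0 by auto
      then show "x \<in> G k" using x by simp
    qed
    then show ?thesis unfolding Mc_def using cspan_least[OF _ sub] by blast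
  qed
  have P: "\<forall>ns k. length ns = length xs \<and> sum_list ns = k + length xs \<and>
     (\<forall>j < length xs. 1 \<le> ns ! j \<and> xs ! j \<in> Mc A (ns ! j)) \<longrightarrow> lprod A xs \<in> G k" for xs
  proof (induction xs)
    case Nil then show ?case using G0 by auto
  next
    case (Cons x xs)
    show ?case
    proof (intro allI impI)
      fix ns k assume h: "length ns = length (x # xs) \<and> sum_list ns = k + length (x # xs) \<and>
         (\<forall>j < length (x # xs). 1 \<le> ns ! j \<and> (x # xs) ! j \<in> Mc A (ns ! j))"
      obtain i ms where ns: "ns = i # ms" using h by (cases ns) auto
      have hi: "1 \<le> i" "x \<in> Mc A i" using h ns by force+
      have hm: "length ms = length xs" "\<forall>j < length xs. 1 \<le> ms ! j \<and> xs ! j \<in> Mc A (ms ! j)"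
        using h ns by force+
      have ge: "length xs \<le> sum_list ms" using sum_list_ge_length[of ms] hm by auto
      define k' where "k' = sum_list ms - length xs"
      have sk: "sum_list ms = k' + length xs" using ge k'_def by simp
      obtain i' where i': "i = Suc i'" using hi by (cases i) auto
      have ik: "i' + k' = k" using h ns sk i' by simp
      have IH: "lprod A xs \<in> G k'" using Cons.IH hm sk by blast
      have "x \<in> G i'" using M hi i' by auto
      then have "x \<otimes> lprod A xs \<in> G (i' + k')" using Gm IH by blast
      then show "lprod A (x # xs) \<in> G k" using ik by simp
    qed
  qed
  have "NCgen k \<subseteq> G k" unfolding NCgen_def using P by blast
  then show ?thesis unfolding NCF_eq using cspan_least[OF _ sub] by blast
qed

lemma geo_closed: "q \<in> carrier A \<Longrightarrow> geo A q n \<in> carrier A" by (induction n) auto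

lemma geo_comm: "q \<in> carrier A \<Longrightarrow> q \<otimes> geo A q n = geo A q n \<otimes> q"
proof (induction n)
  case 0 then show ?case by simp
next
  case (Suc n)
  have g: "geo A q n \<in> carrier A" using geo_closed Suc by auto
  have "q \<otimes> geo A q (Suc n) = q \<oplus> q \<otimes> (q \<otimes> geo A q n)" using Suc g by (simp add: r_distr)
  also have "\<dots> = q \<oplus> q \<otimes> (geo A q n \<otimes> q)" using Suc by simp
  also have "\<dots> = geo A q (Suc n) \<otimes> q" using Suc.prems g by (simp add: l_distr m_assoc)
  finally show ?case .
qed

lemma geo_r: "q \<in> carrier A \<Longrightarrow> (\<one> \<ominus> q) \<otimes> geo A q n = \<one> \<ominus> q [^] n"
proof (induction n)
  case 0 then show ?case by (simp add: minus_eq r_neg)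
next
  case (Suc n)
  have g: "geo A q n \<in> carrier A" using geo_closed Suc by auto
  have qc: "\<one> \<ominus> q \<in> carrier A" "q [^] n \<in> carrier A" using Suc by auto
  have cq: "(\<one> \<ominus> q) \<otimes> q = q \<otimes> (\<one> \<ominus> q)" using Suc by (simp add: minus_eq l_distr r_distr l_minus r_minus)
  have "(\<one> \<ominus> q) \<otimes> geo A q (Suc n) = (\<one> \<ominus> q) \<oplus> ((\<one> \<ominus> q) \<otimes> q) \<otimes> geo A q n"
    using Suc.prems g qc by (simp add: r_distr m_assoc)
  also have "\<dots> = (\<one> \<ominus> q) \<oplus> q \<otimes> ((\<one> \<ominus> q) \<otimes> geo A q n)" using cq Suc.prems g qc by (simp add: m_assoc)
  also have "\<dots> = (\<one> \<ominus> q) \<oplus> q \<otimes> (\<one> \<ominus> q [^] n)" using Suc.IH Suc.prems by simp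
  also have "\<dots> = (\<one> \<ominus> q) \<oplus> (q \<ominus> q \<otimes> q [^] n)" using Suc.prems qc by (simp add: minus_eq r_distr r_minus)
  also have "\<dots> = \<one> \<ominus> q \<otimes> q [^] n" using Suc.prems qc by (simp add: minus_eq a_assoc r_neg1)
  also have "\<dots> = \<one> \<ominus> q [^] Suc n" using nat_pow_Suc2[OF Suc.prems] by simp
  finally show ?case .
qed

lemma geo_l: "q \<in> carrier A \<Longrightarrow> geo A q n \<otimes> (\<one> \<ominus> q) = \<one> \<ominus> q [^] n"
proof -
  assume q: "q \<in> carrier A"
  have g: "geo A q n \<in> carrier A" using geo_closed q by auto
  have "geo A q n \<otimes> (\<one> \<ominus> q) = geo A q n \<otimes> \<one> \<oplus> geo A q n \<otimes> (\<ominus> q)"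
    unfolding minus_eq by (rule r_distr) (use q g in auto)
  also have "\<dots> = geo A q n \<ominus> geo A q n \<otimes> q" unfolding minus_eq by (simp only: r_one[OF g] r_minus[OF g q])
  also have "\<dots> = geo A q n \<ominus> q \<otimes> geo A q n" using geo_comm q by simp
  also have "\<dots> = (\<one> \<ominus> q) \<otimes> geo A q n" using q g by (simp add: minus_eq l_distr l_minus)
  finally show ?thesis using geo_r q by simp
qed

definition mnm :: "'a set \<Rightarrow> 'a set" where "mnm \<Gamma> = {lprod A xs | xs. set xs \<subseteq> \<Gamma>}"

lemma mnm_sub: "\<Gamma> \<subseteq> carrier A \<Longrightarrow> mnm \<Gamma> \<subseteq> carrier A" unfolding mnm_def by auto

lemma T_mul: assumes "\<Gamma> \<subseteq> carrier A" "x \<in> cspan A (mnm \<Gamma>)" "y \<in> cspan A (mnm \<Gamma>)"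
  shows "x \<otimes> y \<in> cspan A (mnm \<Gamma>)"
proof (rule span_bilin[OF mnm_sub[OF assms(1)] mnm_sub[OF assms(1)] cspan_subsp[OF mnm_sub[OF assms(1)]] _ assms(2,3)])
  fix a b assume "a \<in> mnm \<Gamma>" "b \<in> mnm \<Gamma>"
  then obtain xs ys where "a = lprod A xs" "b = lprod A ys" "set xs \<subseteq> \<Gamma>" "set ys \<subseteq> \<Gamma>" unfolding mnm_def by auto
  then have "a \<otimes> b \<in> mnm \<Gamma>" unfolding mnm_def using lprod_append assms(1)
    by (auto intro!: exI[of _ "xs @ ys"])
  then show "a \<otimes> b \<in> cspan A (mnm \<Gamma>)" using cspan_inc by blast
qed

lemma T_gen: "\<Gamma> \<subseteq> carrier A \<Longrightarrow> g \<in> \<Gamma> \<Longrightarrow> g \<in> cspan A (mnm \<Gamma>)"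
proof -
  assume h: "\<Gamma> \<subseteq> carrier A" "g \<in> \<Gamma>"
  then have "lprod A [g] \<in> mnm \<Gamma>" unfolding mnm_def by (intro CollectI exI[of _ "[g]"]) auto
  moreover have "lprod A [g] = g" using h by auto
  ultimately show ?thesis using cspan_inc[of "mnm \<Gamma>"] by auto
qed

lemma T_one: "\<one> \<in> cspan A (mnm \<Gamma>)"
proof -
  have "lprod A [] \<in> mnm \<Gamma>" unfolding mnm_def by (intro CollectI exI[of _ "[]"]) auto
  then show ?thesis using cspan_inc[of "mnm \<Gamma>"] by auto
qed

lemma T_geo: assumes "\<Gamma> \<subseteq> carrier A" "q \<in> cspan A (mnm \<Gamma>)" shows "geo A q n \<in> cspan A (mnm \<Gamma>)"
proof (induction n)
  case 0 then show ?case using subspD(2)[OF cspan_subsp[OF mnm_sub[OF assms(1)]]] by simp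
next
  case (Suc n) then show ?case
    using subspD(3)[OF cspan_subsp[OF mnm_sub[OF assms(1)]]] T_one T_mul[OF assms(1,2)] by simp
qed

lemma Mc_ideal: assumes "a \<in> carrier A" "x \<in> Mc A k" shows "a \<otimes> x \<in> Mc A k" "x \<otimes> a \<in> Mc A k"
proof -
  have ac: "a \<in> cspan A (carrier A)" using assms cspan_inc by blast
  show "a \<otimes> x \<in> Mc A k" unfolding Mc_def
  proof (rule span_bilin[OF subset_refl Mgen_sub cspan_subsp[OF Mgen_sub] _ ac assms(2)[unfolded Mc_def]])
    fix y z assume "y \<in> carrier A" "z \<in> {a \<otimes> l \<otimes> b | a l b. a \<in> carrier A \<and> l \<in> Lc A k \<and> b \<in> carrier A}"
    then obtain u l v where z: "z = u \<otimes> l \<otimes> v" "u \<in> carrier A" "l \<in> Lc A k" "v \<in> carrier A" "y \<in> carrier A" by blast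
    have lc: "l \<in> carrier A" using z(3) Lc_sub by blast
    have "y \<otimes> z = (y \<otimes> u) \<otimes> l \<otimes> v" using z lc by (simp add: m_assoc)
    then have "y \<otimes> z \<in> Mc A k" using Mc_gen[where u="y \<otimes> u" and l=l and v=v and k=k] z by simp
    then show "y \<otimes> z \<in> cspan A {a \<otimes> l \<otimes> b | a l b. a \<in> carrier A \<and> l \<in> Lc A k \<and> b \<in> carrier A}" unfolding Mc_def .
  qed
  show "x \<otimes> a \<in> Mc A k" unfolding Mc_def
  proof (rule span_bilin[OF Mgen_sub subset_refl cspan_subsp[OF Mgen_sub] _ assms(2)[unfolded Mc_def] ac])
    fix y z assume "z \<in> carrier A" "y \<in> {a \<otimes> l \<otimes> b | a l b. a \<in> carrier A \<and> l \<in> Lc A k \<and> b \<in> carrier A}"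
    then obtain u l v where y: "y = u \<otimes> l \<otimes> v" "u \<in> carrier A" "l \<in> Lc A k" "v \<in> carrier A" "z \<in> carrier A" by blast
    have lc: "l \<in> carrier A" using y(3) Lc_sub by blast
    have "y \<otimes> z = u \<otimes> l \<otimes> (v \<otimes> z)" using y lc by (simp add: m_assoc)
    then have "y \<otimes> z \<in> Mc A k" using Mc_gen[where u=u and l=l and v="v \<otimes> z" and k=k] y by simp
    then show "y \<otimes> z \<in> cspan A {a \<otimes> l \<otimes> b | a l b. a \<in> carrier A \<and> l \<in> Lc A k \<and> b \<in> carrier A}" unfolding Mc_def .
  qed
qed

lemma Mc_is_ideal: "ideal (Mc A k) A"
proof (rule idealI[OF ring_axioms])
  note M = subspD[OF Mc_subsp[of k]]
  show "subgroup (Mc A k) (add_monoid A)"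
    by (rule subgroup.intro) (use M in \<open>auto simp: a_inv_def[symmetric]\<close>)
qed (use Mc_ideal in auto)

definition idl :: "'a set \<Rightarrow> bool" where
  "idl J \<longleftrightarrow> subsp J \<and> (\<forall>x\<in>J. \<forall>a\<in>carrier A. a \<otimes> x \<in> J \<and> x \<otimes> a \<in> J)"

lemma idl_F: "idl (NCF A k)" unfolding idl_def using NCF_subsp F_ideal by blast
lemma idl_carrier: "idl (carrier A)" unfolding idl_def using subsp_carrier by blast

lemma ore_step: assumes J: "idl J" and t: "t \<in> carrier A"
  shows "\<forall>x\<in>J. ((comm A t) ^^ m) x = \<zero> \<longrightarrow> (\<forall>n\<ge>m. \<exists>b\<in>J. x \<otimes> t [^] n = t \<otimes> b)"
proof (induction m)
  have J0: "\<zero> \<in> J" using J unfolding idl_def subsp_def by auto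
  case 0 show ?case
  proof (intro ballI impI allI)
    fix x and n :: nat assume "x \<in> J" "((comm A t) ^^ 0) x = \<zero>"
    then have "x = \<zero>" by simp
    moreover have "t [^] n \<in> carrier A" using t by simp
    ultimately show "\<exists>b\<in>J. x \<otimes> t [^] n = t \<otimes> b" using J0 t by (intro bexI[of _ \<zero>]) auto
  qed
next
  case (Suc m)
  show ?case
  proof (intro ballI impI allI)
    fix x n assume x: "x \<in> J" "((comm A t) ^^ Suc m) x = \<zero>" "Suc m \<le> n"
    have xc: "x \<in> carrier A" using x J unfolding idl_def subsp_def by auto
    obtain n' where n: "n = Suc n'" "m \<le> n'" using x(3) by (cases n) auto
    have Dx: "comm A t x \<in> J" unfolding comm_def using J x(1) t unfolding idl_def by (auto intro: subspD(6))
    have "((comm A t) ^^ m) (comm A t x) = \<zero>" using x(2) by (simp add: funpow_Suc_right del: funpow.simps)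
    then obtain b' where b': "b' \<in> J" "comm A t x \<otimes> t [^] n' = t \<otimes> b'" using Suc.IH Dx n(2) by blast
    have bc: "b' \<in> carrier A" using b' J unfolding idl_def subsp_def by auto
    have tn: "t [^] n' \<in> carrier A" using t by simp
    have pw: "t [^] n = t \<otimes> t [^] n'" by (simp only: n nat_pow_Suc2[OF t])
    have e1: "t \<otimes> (x \<otimes> t [^] n' \<ominus> b') = t \<otimes> x \<otimes> t [^] n' \<ominus> t \<otimes> b'"
      using t xc tn bc by (simp add: minus_eq r_distr r_minus m_assoc)
    have e3: "t \<otimes> x \<otimes> t [^] n' \<ominus> comm A t x \<otimes> t [^] n' = x \<otimes> t [^] n" unfolding comm_def pw using t xc tn
      by algebra
    have e: "x \<otimes> t [^] n = t \<otimes> (x \<otimes> t [^] n' \<ominus> b')" using e1 e3 b'(2) by simp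
    have "x \<otimes> t [^] n' \<ominus> b' \<in> J" using J x(1) b'(1) tn unfolding idl_def by (auto intro: subspD(6))
    then show "\<exists>b\<in>J. x \<otimes> t [^] n = t \<otimes> b" using e by blast
  qed
qed

lemma rev_step: assumes s: "s \<in> carrier A"
  shows "\<forall>y\<in>carrier A. s \<otimes> y = \<zero> \<and> ((comm A s) ^^ m) y = \<zero> \<longrightarrow> (\<forall>n\<ge>m. y \<otimes> s [^] n = \<zero>)"
proof (induction m)
  case 0 then show ?case using s by auto
next
  case (Suc m)
  show ?case
  proof (intro ballI impI allI)
    fix y n assume y: "y \<in> carrier A" "s \<otimes> y = \<zero> \<and> ((comm A s) ^^ Suc m) y = \<zero>" "Suc m \<le> n"
    obtain n' where n: "n = Suc n'" "m \<le> n'" using y(3) by (cases n) auto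
    have sy: "s \<otimes> y = \<zero>" using y by simp
    have Dc: "comm A s y \<in> carrier A" using s y by simp
    have sD: "s \<otimes> comm A s y = \<zero>"
    proof -
      have "s \<otimes> comm A s y = s \<otimes> (s \<otimes> y) \<ominus> (s \<otimes> y) \<otimes> s" unfolding comm_def
        using s y(1) by (simp add: minus_eq r_distr r_minus m_assoc)
      then show ?thesis using sy s by simp
    qed
    have "((comm A s) ^^ m) (comm A s y) = \<zero>" using y(2) by (simp add: funpow_Suc_right del: funpow.simps)
    then have z: "comm A s y \<otimes> s [^] n' = \<zero>" using Suc.IH Dc sD n(2) by blast
    have pw: "s [^] n = s \<otimes> s [^] n'" by (simp only: n nat_pow_Suc2[OF s])
    have pc: "s [^] n' \<in> carrier A" using s by simp
    have "y \<otimes> s [^] n = (s \<otimes> y \<ominus> comm A s y) \<otimes> s [^] n'" unfolding comm_def pw using s y(1) pc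
      by algebra
    also have "\<dots> = \<ominus> (comm A s y \<otimes> s [^] n')" using sy s Dc by (simp add: minus_eq l_minus)
    finally show "y \<otimes> s [^] n = \<zero>" using z by simp
  qed
qed

end

locale cxa_nil = cxa + fixes N :: nat assumes FN: "NCF A N = {\<zero>}"
begin

lemma adN: "t \<in> carrier A \<Longrightarrow> x \<in> carrier A \<Longrightarrow> ((comm A t) ^^ N) x = \<zero>"
  using ad_F[of t x N] FN by auto

lemma oreJ: assumes "idl J" "x \<in> J" "t \<in> carrier A" shows "\<exists>b\<in>J. x \<otimes> t [^] N = t \<otimes> b"
proof -
  have "x \<in> carrier A" using assms unfolding idl_def subsp_def by auto
  then show ?thesis using ore_step[OF assms(1,3), of N] adN assms by blast
qed

lemma revN: assumes "s \<in> carrier A" "y \<in> carrier A" "s \<otimes> y = \<zero>" shows "y \<otimes> s [^] N = \<zero>"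
  using rev_step[OF assms(1), of N] adN assms by blast

end


locale locB = cxa_nil A N for A :: "(complex,'a) module" (structure) and N +
  fixes S :: "'a set" and B :: "(complex,'b) module" and \<phi> :: "'a \<Rightarrow> 'b"
  assumes loc: "ore_localization A S B \<phi>" and S_sub: "S \<subseteq> carrier A" and one_S: "\<one> \<in> S"
    and mult_S: "\<lbrakk>s \<in> S; t \<in> S\<rbrakk> \<Longrightarrow> s \<otimes> t \<in> S"
begin

lemma cxB: "cx_algebra B" using loc unfolding ore_localization_def by auto
lemma ringB: "ring B" using cxB unfolding cx_algebra_def by auto

sublocale B: cxa B using ringB cxB by (simp add: cxa_def cxa_axioms_def)

lemma hom: "\<phi> \<in> ring_hom A B" using loc unfolding ore_localization_def by auto
lemma phi_c[simp]: "x \<in> carrier A \<Longrightarrow> \<phi> x \<in> carrier B" using ring_hom_closed[OF hom] .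
lemma phi_m: "x \<in> carrier A \<Longrightarrow> y \<in> carrier A \<Longrightarrow> \<phi> (x \<otimes> y) = \<phi> x \<otimes>\<^bsub>B\<^esub> \<phi> y"
  using ring_hom_mult[OF hom] by simp
lemma phi_a: "x \<in> carrier A \<Longrightarrow> y \<in> carrier A \<Longrightarrow> \<phi> (x \<oplus> y) = \<phi> x \<oplus>\<^bsub>B\<^esub> \<phi> y"
  using ring_hom_add[OF hom] by simp
lemma phi_1[simp]: "\<phi> \<one> = \<one>\<^bsub>B\<^esub>" using ring_hom_one[OF hom] .
lemma phi_0[simp]: "\<phi> \<zero> = \<zero>\<^bsub>B\<^esub>" using ring_hom_zero[OF hom] ring_axioms ringB by blast
lemma phi_neg: "x \<in> carrier A \<Longrightarrow> \<phi> (\<ominus> x) = \<ominus>\<^bsub>B\<^esub> \<phi> x"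
proof -
  assume x: "x \<in> carrier A"
  have "\<phi> (\<ominus> x) \<oplus>\<^bsub>B\<^esub> \<phi> x = \<zero>\<^bsub>B\<^esub>" using phi_a[of "\<ominus> x" x] x by (simp add: l_neg)
  then show ?thesis using x by (simp add: B.minus_equality)
qed
lemma phi_minus: "x \<in> carrier A \<Longrightarrow> y \<in> carrier A \<Longrightarrow> \<phi> (x \<ominus> y) = \<phi> x \<ominus>\<^bsub>B\<^esub> \<phi> y"
  by (simp add: minus_eq B.minus_eq phi_a phi_neg)
lemma phi_sm: "x \<in> carrier A \<Longrightarrow> \<phi> (c \<odot>\<^bsub>A\<^esub> x) = c \<odot>\<^bsub>B\<^esub> \<phi> x"
  using loc unfolding ore_localization_def by auto
lemma phi_comm: "x \<in> carrier A \<Longrightarrow> y \<in> carrier A \<Longrightarrow> \<phi> (comm A x y) = comm B (\<phi> x) (\<phi> y)"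
  unfolding comm_def by (simp add: phi_minus phi_m)

lemma Sc: "s \<in> S \<Longrightarrow> s \<in> carrier A" using S_sub by auto
lemma pow_S: "s \<in> S \<Longrightarrow> s [^] (n::nat) \<in> S" by (induction n) (auto simp: one_S mult_S)

definition u :: "'a \<Rightarrow> 'b" where "u s = inv\<^bsub>B\<^esub> (\<phi> s)"

lemma unit: "s \<in> S \<Longrightarrow> \<phi> s \<in> Units B" using loc unfolding ore_localization_def by auto
lemma u_c[simp]: "s \<in> S \<Longrightarrow> u s \<in> carrier B" unfolding u_def using unit by auto
lemma u_l[simp]: "s \<in> S \<Longrightarrow> u s \<otimes>\<^bsub>B\<^esub> \<phi> s = \<one>\<^bsub>B\<^esub>" unfolding u_def using unit by auto
lemma u_r[simp]: "s \<in> S \<Longrightarrow> \<phi> s \<otimes>\<^bsub>B\<^esub> u s = \<one>\<^bsub>B\<^esub>" unfolding u_def using unit by auto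
lemma u_1[simp]: "u \<one> = \<one>\<^bsub>B\<^esub>" unfolding u_def by simp
lemma u_r2[simp]: "s \<in> S \<Longrightarrow> x \<in> carrier B \<Longrightarrow> \<phi> s \<otimes>\<^bsub>B\<^esub> (u s \<otimes>\<^bsub>B\<^esub> x) = x"
  using B.m_assoc[of "\<phi> s" "u s" x] Sc by simp
lemma u_l2[simp]: "s \<in> S \<Longrightarrow> x \<in> carrier B \<Longrightarrow> u s \<otimes>\<^bsub>B\<^esub> (\<phi> s \<otimes>\<^bsub>B\<^esub> x) = x"
  using B.m_assoc[of "u s" "\<phi> s" x] Sc by simp

lemma repr: "y \<in> carrier B \<Longrightarrow> \<exists>a\<in>carrier A. \<exists>s\<in>S. y = \<phi> a \<otimes>\<^bsub>B\<^esub> u s"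
  using loc unfolding ore_localization_def u_def by auto

lemma u_mult: assumes "s \<in> S" "t \<in> S" shows "u (s \<otimes> t) = u t \<otimes>\<^bsub>B\<^esub> u s"
proof -
  have st: "s \<otimes> t \<in> S" using mult_S assms by auto
  have c: "\<phi> s \<in> carrier B" "\<phi> t \<in> carrier B" using assms Sc by auto
  have "u (s \<otimes> t) = u (s \<otimes> t) \<otimes>\<^bsub>B\<^esub> (\<phi> (s \<otimes> t) \<otimes>\<^bsub>B\<^esub> (u t \<otimes>\<^bsub>B\<^esub> u s))"
  proof -
    have "\<phi> (s \<otimes> t) \<otimes>\<^bsub>B\<^esub> (u t \<otimes>\<^bsub>B\<^esub> u s) = \<phi> s \<otimes>\<^bsub>B\<^esub> ((\<phi> t \<otimes>\<^bsub>B\<^esub> u t) \<otimes>\<^bsub>B\<^esub> u s)"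
      using assms Sc c by (simp add: phi_m B.m_assoc)
    also have "\<dots> = \<one>\<^bsub>B\<^esub>" using assms c by simp
    finally show ?thesis using st by simp
  qed
  also have "\<dots> = (u (s \<otimes> t) \<otimes>\<^bsub>B\<^esub> \<phi> (s \<otimes> t)) \<otimes>\<^bsub>B\<^esub> (u t \<otimes>\<^bsub>B\<^esub> u s)"
    using st assms Sc by (simp add: B.m_assoc)
  also have "\<dots> = u t \<otimes>\<^bsub>B\<^esub> u s" using st assms by simp
  finally show ?thesis .
qed

lemma frac_eq: assumes "s \<in> S" "d \<in> S" "c \<in> carrier A" "s \<otimes> c = d" shows "u s = \<phi> c \<otimes>\<^bsub>B\<^esub> u d"
proof -
  have sc: "\<phi> s \<in> carrier B" "\<phi> c \<in> carrier B" using assms Sc by auto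
  have "\<phi> c = u s \<otimes>\<^bsub>B\<^esub> \<phi> d"
  proof -
    have "u s \<otimes>\<^bsub>B\<^esub> \<phi> d = u s \<otimes>\<^bsub>B\<^esub> (\<phi> s \<otimes>\<^bsub>B\<^esub> \<phi> c)" using assms Sc phi_m by metis
    also have "\<dots> = \<phi> c" using assms sc by (simp add: B.m_assoc[symmetric])
    finally show ?thesis by simp
  qed
  then have "\<phi> c \<otimes>\<^bsub>B\<^esub> u d = u s \<otimes>\<^bsub>B\<^esub> (\<phi> d \<otimes>\<^bsub>B\<^esub> u d)" using assms Sc by (simp add: B.m_assoc)
  then show ?thesis using assms by simp
qed

lemma swap: assumes J: "idl J" and f: "f \<in> J" and s: "s \<in> S"
  shows "\<exists>f'\<in>J. \<exists>s'\<in>S. u s \<otimes>\<^bsub>B\<^esub> \<phi> f = \<phi> f' \<otimes>\<^bsub>B\<^esub> u s'"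
proof -
  have sc: "s \<in> carrier A" using s Sc by auto
  obtain b where b: "b \<in> J" "f \<otimes> s [^] N = s \<otimes> b" using oreJ[OF J f sc] by blast
  have fc: "f \<in> carrier A" "b \<in> carrier A" using J f b unfolding idl_def subsp_def by auto
  have sN: "s [^] N \<in> S" using pow_S s by auto
  have e: "\<phi> f \<otimes>\<^bsub>B\<^esub> \<phi> (s [^] N) = \<phi> s \<otimes>\<^bsub>B\<^esub> \<phi> b" using b(2) fc sc by (metis phi_m nat_pow_closed)
  have "u s \<otimes>\<^bsub>B\<^esub> \<phi> f = u s \<otimes>\<^bsub>B\<^esub> (\<phi> f \<otimes>\<^bsub>B\<^esub> \<phi> (s [^] N)) \<otimes>\<^bsub>B\<^esub> u (s [^] N)"
    using fc sc sN s by (simp add: B.m_assoc)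
  also have "\<dots> = u s \<otimes>\<^bsub>B\<^esub> (\<phi> s \<otimes>\<^bsub>B\<^esub> \<phi> b) \<otimes>\<^bsub>B\<^esub> u (s [^] N)" using e by simp
  also have "\<dots> = \<phi> b \<otimes>\<^bsub>B\<^esub> u (s [^] N)" using fc sc sN s by (simp add: B.m_assoc[symmetric])
  finally show ?thesis using b(1) sN by blast
qed

definition G :: "nat \<Rightarrow> 'b set" where
  "G k = {y. \<exists>f\<in>NCF A k. \<exists>s\<in>S. y = \<phi> f \<otimes>\<^bsub>B\<^esub> u s}"

lemma NCc: "f \<in> NCF A k \<Longrightarrow> f \<in> carrier A" using NCF_sub by blast
lemma G_sub: "G k \<subseteq> carrier B" unfolding G_def using NCc by auto

lemma G_intro: "f \<in> NCF A k \<Longrightarrow> s \<in> S \<Longrightarrow> \<phi> f \<otimes>\<^bsub>B\<^esub> u s \<in> G k" unfolding G_def by blast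
lemma G_phi: "f \<in> NCF A k \<Longrightarrow> \<phi> f \<in> G k" using G_intro[of f k \<one>] one_S NCc by auto

lemma G0: "carrier B \<subseteq> G 0" using repr carrier_F0 unfolding G_def by blast

lemma GN: "G N \<subseteq> {\<zero>\<^bsub>B\<^esub>}" unfolding G_def using FN by auto

lemma G_subsp: "B.subsp (G k)"
  unfolding B.subsp_def
proof (intro conjI ballI allI impI)
  show "G k \<subseteq> carrier B" by (rule G_sub)
  show "\<zero>\<^bsub>B\<^esub> \<in> G k" using G_phi[of \<zero> k] subspD(2)[OF NCF_subsp] by simp
next
  fix x y assume "x \<in> G k" "y \<in> G k"
  then obtain f1 s1 f2 s2 where h: "f1 \<in> NCF A k" "s1 \<in> S" "x = \<phi> f1 \<otimes>\<^bsub>B\<^esub> u s1"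
    "f2 \<in> NCF A k" "s2 \<in> S" "y = \<phi> f2 \<otimes>\<^bsub>B\<^esub> u s2" unfolding G_def by blast
  have c: "s1 \<in> carrier A" "s2 \<in> carrier A" "f1 \<in> carrier A" "f2 \<in> carrier A" using h Sc NCF_sub by auto
  obtain b where b: "b \<in> carrier A" "s2 \<otimes> s1 [^] N = s1 \<otimes> b" using oreJ[OF idl_carrier c(2) c(1)] by blast
  define D where "D = s2 \<otimes> s1 [^] N"
  have DS: "D \<in> S" unfolding D_def using mult_S pow_S h by auto
  have u1: "u s1 = \<phi> b \<otimes>\<^bsub>B\<^esub> u D" using frac_eq[OF h(2) DS b(1)] b(2) D_def by simp
  have u2: "u s2 = \<phi> (s1 [^] N) \<otimes>\<^bsub>B\<^esub> u D" using frac_eq[OF h(5) DS] c D_def by simp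
  have "x \<oplus>\<^bsub>B\<^esub> y = \<phi> (f1 \<otimes> b \<oplus> f2 \<otimes> s1 [^] N) \<otimes>\<^bsub>B\<^esub> u D"
    using h c b DS unfolding u1 u2 by (simp add: phi_a phi_m B.m_assoc B.l_distr)
  moreover have "f1 \<otimes> b \<oplus> f2 \<otimes> s1 [^] N \<in> NCF A k"
    using F_ideal h b c subspD(3)[OF NCF_subsp] by simp
  ultimately show "x \<oplus>\<^bsub>B\<^esub> y \<in> G k" using G_intro DS by simp
next
  fix c x assume "x \<in> G k"
  then obtain f s where h: "f \<in> NCF A k" "s \<in> S" "x = \<phi> f \<otimes>\<^bsub>B\<^esub> u s" unfolding G_def by blast
  have fc: "f \<in> carrier A" using h NCF_sub by auto
  have "c \<odot>\<^bsub>B\<^esub> x = \<phi> (c \<odot>\<^bsub>A\<^esub> f) \<otimes>\<^bsub>B\<^esub> u s" using h fc by (simp add: phi_sm B.sm_l)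
  then show "c \<odot>\<^bsub>B\<^esub> x \<in> G k" using G_intro h subspD(4)[OF NCF_subsp] by simp
qed

lemma G_mul: assumes "x \<in> G k" "y \<in> G l" shows "x \<otimes>\<^bsub>B\<^esub> y \<in> G (k + l)"
proof -
  obtain f s g t where h: "f \<in> NCF A k" "s \<in> S" "x = \<phi> f \<otimes>\<^bsub>B\<^esub> u s"
    "g \<in> NCF A l" "t \<in> S" "y = \<phi> g \<otimes>\<^bsub>B\<^esub> u t" using assms unfolding G_def by blast
  obtain g' s' where g': "g' \<in> NCF A l" "s' \<in> S" "u s \<otimes>\<^bsub>B\<^esub> \<phi> g = \<phi> g' \<otimes>\<^bsub>B\<^esub> u s'"
    using swap[OF idl_F h(4,2)] by blast
  have c: "f \<in> carrier A" "g \<in> carrier A" "g' \<in> carrier A" using h g' NCF_sub by auto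
  have "x \<otimes>\<^bsub>B\<^esub> y = \<phi> f \<otimes>\<^bsub>B\<^esub> (u s \<otimes>\<^bsub>B\<^esub> \<phi> g) \<otimes>\<^bsub>B\<^esub> u t" using h c by (simp add: B.m_assoc)
  also have "\<dots> = \<phi> (f \<otimes> g') \<otimes>\<^bsub>B\<^esub> u (t \<otimes> s')" using g' h c by (simp add: u_mult phi_m B.m_assoc)
  finally show ?thesis using G_intro F_mul h g' mult_S by simp
qed

lemma G_neg: "x \<in> G k \<Longrightarrow> \<ominus>\<^bsub>B\<^esub> x \<in> G k" using B.subspD(5)[OF G_subsp] .

lemma comm_inv: assumes "t \<in> S" "w \<in> carrier B"
  shows "comm B (u t) w = \<ominus>\<^bsub>B\<^esub> (u t \<otimes>\<^bsub>B\<^esub> comm B (\<phi> t) w \<otimes>\<^bsub>B\<^esub> u t)"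
proof -
  have c: "\<phi> t \<in> carrier B" "u t \<in> carrier B" using assms Sc by auto
  have "u t \<otimes>\<^bsub>B\<^esub> comm B (\<phi> t) w \<otimes>\<^bsub>B\<^esub> u t =
      (u t \<otimes>\<^bsub>B\<^esub> \<phi> t) \<otimes>\<^bsub>B\<^esub> w \<otimes>\<^bsub>B\<^esub> u t \<ominus>\<^bsub>B\<^esub> u t \<otimes>\<^bsub>B\<^esub> w \<otimes>\<^bsub>B\<^esub> (\<phi> t \<otimes>\<^bsub>B\<^esub> u t)"
    unfolding comm_def using c assms(2) by algebra
  also have "\<dots> = w \<otimes>\<^bsub>B\<^esub> u t \<ominus>\<^bsub>B\<^esub> u t \<otimes>\<^bsub>B\<^esub> w" using assms c by simp
  finally have e: "u t \<otimes>\<^bsub>B\<^esub> comm B (\<phi> t) w \<otimes>\<^bsub>B\<^esub> u t = w \<otimes>\<^bsub>B\<^esub> u t \<ominus>\<^bsub>B\<^esub> u t \<otimes>\<^bsub>B\<^esub> w" .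
  have "comm B (u t) w = \<ominus>\<^bsub>B\<^esub> (w \<otimes>\<^bsub>B\<^esub> u t \<ominus>\<^bsub>B\<^esub> u t \<otimes>\<^bsub>B\<^esub> w)"
    unfolding comm_def using c assms(2) by algebra
  then show ?thesis using e by simp
qed

lemma C1: assumes "y \<in> carrier B" "f \<in> NCF A k" shows "comm B y (\<phi> f) \<in> G (Suc k)"
proof -
  obtain a t where h: "a \<in> carrier A" "t \<in> S" "y = \<phi> a \<otimes>\<^bsub>B\<^esub> u t" using repr assms(1) by blast
  have c: "f \<in> carrier A" "t \<in> carrier A" using assms h NCc Sc by auto
  have cb: "\<phi> a \<in> carrier B" "\<phi> f \<in> carrier B" "u t \<in> carrier B" "\<phi> t \<in> carrier B" using c h by auto
  have g1: "comm B (\<phi> a) (\<phi> f) \<in> G (Suc k)"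
    using phi_comm[OF h(1) c(1)] G_phi[OF comm_F[OF h(1) assms(2)]] by simp
  have g2: "comm B (\<phi> t) (\<phi> f) \<in> G (Suc k)"
    using phi_comm[OF c(2) c(1)] G_phi[OF comm_F[OF c(2) assms(2)]] by simp
  have g3: "comm B (u t) (\<phi> f) \<in> G (Suc k)"
  proof -
    have "u t \<otimes>\<^bsub>B\<^esub> comm B (\<phi> t) (\<phi> f) \<in> G (0 + Suc k)" using G_mul G0 g2 cb by blast
    then have "u t \<otimes>\<^bsub>B\<^esub> comm B (\<phi> t) (\<phi> f) \<otimes>\<^bsub>B\<^esub> u t \<in> G (Suc k + 0)"
      using G_mul[OF _ subsetD[OF G0 cb(3)]] by simp
    then show ?thesis using comm_inv[OF h(2) cb(2)] G_neg by simp
  qed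
  have "comm B y (\<phi> f) = \<phi> a \<otimes>\<^bsub>B\<^esub> comm B (u t) (\<phi> f) \<oplus>\<^bsub>B\<^esub> comm B (\<phi> a) (\<phi> f) \<otimes>\<^bsub>B\<^esub> u t"
    unfolding h(3) comm_def using cb by algebra
  moreover have "\<phi> a \<otimes>\<^bsub>B\<^esub> comm B (u t) (\<phi> f) \<in> G (0 + Suc k)" using G_mul[OF subsetD[OF G0 cb(1)] g3] .
  moreover have "comm B (\<phi> a) (\<phi> f) \<otimes>\<^bsub>B\<^esub> u t \<in> G (Suc k + 0)" using G_mul[OF g1 subsetD[OF G0 cb(3)]] .
  ultimately show ?thesis using B.subspD(3)[OF G_subsp] by simp
qed

lemma C2: assumes "y \<in> carrier B" "t \<in> S" shows "comm B y (u t) \<in> G 1"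
proof -
  have c: "t \<in> carrier A" using assms Sc by auto
  have cb: "\<phi> t \<in> carrier B" "u t \<in> carrier B" using c assms by auto
  have "u t \<otimes>\<^bsub>B\<^esub> comm B (\<phi> t) y \<otimes>\<^bsub>B\<^esub> u t =
      (u t \<otimes>\<^bsub>B\<^esub> \<phi> t) \<otimes>\<^bsub>B\<^esub> y \<otimes>\<^bsub>B\<^esub> u t \<ominus>\<^bsub>B\<^esub> u t \<otimes>\<^bsub>B\<^esub> y \<otimes>\<^bsub>B\<^esub> (\<phi> t \<otimes>\<^bsub>B\<^esub> u t)"
    unfolding comm_def using cb assms(1) by algebra
  also have "\<dots> = comm B y (u t)" unfolding comm_def using assms cb by simp
  finally have e: "comm B y (u t) = u t \<otimes>\<^bsub>B\<^esub> comm B (\<phi> t) y \<otimes>\<^bsub>B\<^esub> u t" by simp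
  have "comm B (\<phi> t) y = \<ominus>\<^bsub>B\<^esub> comm B y (\<phi> t)" unfolding comm_def using cb assms(1) by algebra
  moreover have "comm B y (\<phi> t) \<in> G (Suc 0)" using C1[OF assms(1) carrier_F0[OF c]] .
  ultimately have g: "comm B (\<phi> t) y \<in> G 1" using G_neg by simp
  have "u t \<otimes>\<^bsub>B\<^esub> comm B (\<phi> t) y \<in> G (0 + 1)" using G_mul[OF subsetD[OF G0 cb(2)] g] .
  then have "u t \<otimes>\<^bsub>B\<^esub> comm B (\<phi> t) y \<otimes>\<^bsub>B\<^esub> u t \<in> G (1 + 0)"
    using G_mul[OF _ subsetD[OF G0 cb(2)]] by simp
  then show ?thesis using e by simp
qed

lemma G_comm: assumes "y \<in> carrier B" "z \<in> G k" shows "comm B y z \<in> G (Suc k)"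
proof -
  obtain f s where h: "f \<in> NCF A k" "s \<in> S" "z = \<phi> f \<otimes>\<^bsub>B\<^esub> u s" using assms unfolding G_def by blast
  have cb: "\<phi> f \<in> carrier B" "u s \<in> carrier B" using h NCc by auto
  have e: "comm B y z = comm B y (\<phi> f) \<otimes>\<^bsub>B\<^esub> u s \<oplus>\<^bsub>B\<^esub> \<phi> f \<otimes>\<^bsub>B\<^esub> comm B y (u s)"
    using B.comm_mul[OF assms(1) cb] h by simp
  have "comm B y (\<phi> f) \<otimes>\<^bsub>B\<^esub> u s \<in> G (Suc k + 0)" using G_mul[OF C1[OF assms(1) h(1)] subsetD[OF G0 cb(2)]] .
  moreover have "\<phi> f \<otimes>\<^bsub>B\<^esub> comm B y (u s) \<in> G (k + 1)" using G_mul[OF G_phi[OF h(1)] C2[OF assms(1) h(2)]] .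
  ultimately show ?thesis using e B.subspD(3)[OF G_subsp] by simp
qed

lemma nilB: "nc_nilpotent B"
proof -
  have "NCF B N \<subseteq> G N" by (rule B.NCF_le[OF G_subsp G0 G_mul G_comm])
  then have "NCF B N \<subseteq> {\<zero>\<^bsub>B\<^esub>}" using GN by blast
  moreover have "\<zero>\<^bsub>B\<^esub> \<in> NCF B N" using B.subspD(2)[OF B.NCF_subsp] .
  ultimately show ?thesis unfolding nc_nilpotent_def by blast
qed

lemma lprodS: "set hs \<subseteq> S \<Longrightarrow> lprod A hs \<in> S"
  by (induction hs) (auto simp: one_S mult_S)

lemma phi_lprod: "set xs \<subseteq> carrier A \<Longrightarrow> \<phi> (lprod A xs) = lprod B (map \<phi> xs)"
  by (induction xs) (auto simp: phi_m B.lprod_Cons)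

lemma G_pow: "x \<in> G 1 \<Longrightarrow> x [^]\<^bsub>B\<^esub> (n::nat) \<in> G n"
proof (induction n)
  case 0 then show ?case using G0 by auto
next
  case (Suc n) then show ?case using G_mul[of "x [^]\<^bsub>B\<^esub> n" n x 1] by simp
qed

lemma fgB: assumes fgA: "fg_algebra A" and H: "finite H" "H \<subseteq> S"
  and dec: "\<forall>s\<in>S. \<exists>hs m. set hs \<subseteq> H \<and> m \<in> NCF A 1 \<and> s = m \<oplus> lprod A hs"
  shows "fg_algebra B"
proof -
  obtain GA where GA: "finite GA" "GA \<subseteq> carrier A" "carrier A = cspan A (mnm GA)"
    using fgA unfolding fg_algebra_def mnm_def by blast
  define \<Gamma> where "\<Gamma> = \<phi> ` GA \<union> u ` H"
  have \<Gamma>f: "finite \<Gamma>" using GA H unfolding \<Gamma>_def by auto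
  have \<Gamma>c: "\<Gamma> \<subseteq> carrier B" using GA H Sc unfolding \<Gamma>_def by auto
  define T where "T = cspan B (B.mnm \<Gamma>)"
  note Tsub = B.cspan_subsp[OF B.mnm_sub[OF \<Gamma>c], folded T_def]
  have Tm: "x \<in> T \<Longrightarrow> y \<in> T \<Longrightarrow> x \<otimes>\<^bsub>B\<^esub> y \<in> T" for x y using B.T_mul[OF \<Gamma>c] T_def by simp
  have T1: "\<one>\<^bsub>B\<^esub> \<in> T" using B.T_one T_def by simp
  have Tg: "g \<in> \<Gamma> \<Longrightarrow> g \<in> T" for g using B.T_gen[OF \<Gamma>c] T_def by simp
  have phiT: "\<phi> a \<in> T" if a: "a \<in> carrier A" for a
  proof -
    have sub: "subsp {a \<in> carrier A. \<phi> a \<in> T}"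
      unfolding subsp_def using B.subspD[OF Tsub] by (auto simp: phi_a phi_sm)
    have gen: "\<phi> y \<in> T" if yy: "y \<in> mnm GA" for y
    proof -
      obtain xs where xs: "y = lprod A xs" "set xs \<subseteq> GA" using yy unfolding mnm_def by blast
      have "\<phi> y = lprod B (map \<phi> xs)" using phi_lprod xs GA by auto
      moreover have "lprod B (map \<phi> xs) \<in> B.mnm \<Gamma>" unfolding B.mnm_def \<Gamma>_def using xs
        by (intro CollectI exI[of _ "map \<phi> xs"]) auto
      ultimately show ?thesis using B.cspan_inc T_def by auto
    qed
    have "a \<in> cspan A (mnm GA)" using a GA by auto
    then show ?thesis by (rule cspan_induct[OF _ mnm_sub[OF GA(2)] sub]) (use gen in auto)
  qed
  have uH: "u (lprod A hs) \<in> T" if "set hs \<subseteq> H" for hs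
    using that
  proof (induction hs)
    case Nil then show ?case using T1 by simp
  next
    case (Cons h hs)
    have hS: "h \<in> S" "lprod A hs \<in> S" using Cons H lprodS by auto
    have "u (lprod A (h # hs)) = u (lprod A hs) \<otimes>\<^bsub>B\<^esub> u h" using u_mult hS by simp
    moreover have "u h \<in> T" using Tg Cons unfolding \<Gamma>_def by auto
    ultimately show ?case using Tm Cons by auto
  qed
  have uT: "u s \<in> T" if s: "s \<in> S" for s
  proof -
    obtain hs m where d: "set hs \<subseteq> H" "m \<in> NCF A 1" "s = m \<oplus> lprod A hs" using dec s by blast
    define s0 where "s0 = lprod A hs"
    have s0S: "s0 \<in> S" using lprodS d H s0_def by auto
    have mc: "m \<in> carrier A" using d NCc by auto
    have s0c: "s0 \<in> carrier A" using s0S Sc by auto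
    define w where "w = u s0 \<otimes>\<^bsub>B\<^esub> \<phi> m"
    have wc: "w \<in> carrier B" unfolding w_def using s0S mc by simp
    have wG: "w \<in> G 1" unfolding w_def using G_mul[OF subsetD[OF G0 u_c[OF s0S]] G_phi[OF d(2)]] by simp
    have wT: "w \<in> T" unfolding w_def using Tm uH[OF d(1)] phiT[OF mc] s0_def by simp
    define q where "q = \<ominus>\<^bsub>B\<^esub> w"
    have qc: "q \<in> carrier B" unfolding q_def using wc by simp
    have qG: "q \<in> G 1" unfolding q_def using G_neg wG by simp
    have qT: "q \<in> T" unfolding q_def using B.subspD(5)[OF Tsub] wT by simp
    have qN: "q [^]\<^bsub>B\<^esub> N = \<zero>\<^bsub>B\<^esub>" using G_pow[OF qG, of N] GN by auto
    define Xi where "Xi = geo B q N \<otimes>\<^bsub>B\<^esub> u s0"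
    have gc: "geo B q N \<in> carrier B" using B.geo_closed qc by simp
    have XT: "Xi \<in> T" unfolding Xi_def T_def using Tm B.T_geo[OF \<Gamma>c qT[unfolded T_def]] uH[OF d(1)] s0_def T_def by simp
    have ps: "\<phi> s = \<phi> s0 \<otimes>\<^bsub>B\<^esub> (\<one>\<^bsub>B\<^esub> \<ominus>\<^bsub>B\<^esub> q)"
    proof -
      have "\<one>\<^bsub>B\<^esub> \<ominus>\<^bsub>B\<^esub> q = \<one>\<^bsub>B\<^esub> \<oplus>\<^bsub>B\<^esub> w" unfolding q_def using wc by (simp add: B.minus_eq)
      then have "\<phi> s0 \<otimes>\<^bsub>B\<^esub> (\<one>\<^bsub>B\<^esub> \<ominus>\<^bsub>B\<^esub> q) = \<phi> s0 \<oplus>\<^bsub>B\<^esub> \<phi> m"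
        unfolding w_def using s0c mc s0S by (simp add: B.r_distr)
      then show ?thesis using d s0_def mc s0c by (simp add: phi_a B.a_comm)
    qed
    have "\<phi> s \<otimes>\<^bsub>B\<^esub> Xi = \<phi> s0 \<otimes>\<^bsub>B\<^esub> ((\<one>\<^bsub>B\<^esub> \<ominus>\<^bsub>B\<^esub> q) \<otimes>\<^bsub>B\<^esub> geo B q N) \<otimes>\<^bsub>B\<^esub> u s0"
      unfolding ps Xi_def using s0c s0S qc gc by (simp add: B.m_assoc)
    also have "\<dots> = \<one>\<^bsub>B\<^esub>" using B.geo_r[OF qc, of N] qN s0c s0S by (simp add: B.minus_eq)
    finally have e: "\<phi> s \<otimes>\<^bsub>B\<^esub> Xi = \<one>\<^bsub>B\<^esub>" .
    have Xc: "Xi \<in> carrier B" using XT B.subspD(1)[OF Tsub] by auto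
    have "u s = u s \<otimes>\<^bsub>B\<^esub> (\<phi> s \<otimes>\<^bsub>B\<^esub> Xi)" using e s by simp
    also have "\<dots> = Xi" using s Sc Xc by (simp add: B.m_assoc[symmetric])
    finally show ?thesis using XT by simp
  qed
  have "carrier B \<subseteq> T"
  proof
    fix y assume "y \<in> carrier B"
    then obtain a s where "a \<in> carrier A" "s \<in> S" "y = \<phi> a \<otimes>\<^bsub>B\<^esub> u s" using repr by blast
    then show "y \<in> T" using Tm phiT uT by simp
  qed
  moreover have "T \<subseteq> carrier B" using B.subspD(1)[OF Tsub] .
  ultimately have "carrier B = cspan B {lprod B xs | xs. set xs \<subseteq> \<Gamma>}" unfolding T_def B.mnm_def by blast
  then show ?thesis unfolding fg_algebra_def using \<Gamma>f \<Gamma>c by blast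
qed

end


locale ore = ring R for R :: "(complex,'a) module" (structure) +
  fixes S :: "'a set"
  assumes S_sub: "S \<subseteq> carrier R" and one_S: "\<one> \<in> S"
    and mult_S: "\<lbrakk>s\<in>S; t\<in>S\<rbrakk> \<Longrightarrow> s \<otimes> t \<in> S"
    and ore: "\<lbrakk>a \<in> carrier R; s \<in> S\<rbrakk> \<Longrightarrow> \<exists>t\<in>S. \<exists>b\<in>carrier R. a \<otimes> t = s \<otimes> b"
    and rev: "\<lbrakk>s \<in> S; a \<in> carrier R; s \<otimes> a = \<zero>\<rbrakk> \<Longrightarrow> \<exists>t\<in>S. a \<otimes> t = \<zero>"
    and cx: "cx_algebra R"
begin

lemma Sc: "s \<in> S \<Longrightarrow> s \<in> carrier R" using S_sub by auto

lemma L0: assumes "s \<in> S" "s' \<in> S"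
  shows "\<exists>b\<in>carrier R. \<exists>t\<in>S. s \<otimes> b = s' \<otimes> t \<and> s \<otimes> b \<in> S"
proof -
  obtain t b where t: "t \<in> S" "b \<in> carrier R" "s' \<otimes> t = s \<otimes> b"
    using ore[OF Sc[OF assms(2)] assms(1)] by blast
  then show ?thesis using mult_S assms by metis
qed

lemma L1: assumes "s \<in> S" "x \<in> carrier R" "y \<in> carrier R" "s \<otimes> x = s \<otimes> y"
  shows "\<exists>t\<in>S. x \<otimes> t = y \<otimes> t"
proof -
  have s: "s \<in> carrier R" using Sc assms by auto
  have "s \<otimes> (x \<ominus> y) = \<zero>" using assms s
    by (simp add: minus_eq r_distr r_minus r_neg)
  then obtain t where t: "t \<in> S" "(x \<ominus> y) \<otimes> t = \<zero>" using rev assms s by blast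
  then have "x \<otimes> t \<ominus> y \<otimes> t = \<zero>" using assms Sc[OF t(1)]
    by (simp add: minus_eq l_distr l_minus)
  then have "x \<otimes> t = y \<otimes> t" using assms Sc[OF t(1)]
    by (metis m_closed minus_equality minus_minus minus_eq a_inv_closed add.inv_closed r_neg)
  with t show ?thesis by blast
qed

definition equ :: "'a \<times> 'a \<Rightarrow> 'a \<times> 'a \<Rightarrow> bool" where
  "equ p q \<longleftrightarrow> (\<exists>b\<in>carrier R. \<exists>b'\<in>carrier R. snd p \<otimes> b = snd q \<otimes> b' \<and> snd p \<otimes> b \<in> S
      \<and> fst p \<otimes> b = fst q \<otimes> b')"

definition P :: "('a \<times> 'a) set" where "P = carrier R \<times> S"

lemma equ_refl: "p \<in> P \<Longrightarrow> equ p p"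
  unfolding equ_def P_def by (rule bexI[of _ \<one>], rule bexI[of _ \<one>]) (auto simp: Sc)

lemma equ_sym: "equ p q \<Longrightarrow> equ q p"
  unfolding equ_def by metis

lemma equ_trans: assumes "p \<in> P" "q \<in> P" "r \<in> P" "equ p q" "equ q r" shows "equ p r"
proof -
  obtain a s a' s' a'' s'' where pq: "p = (a,s)" "q = (a',s')" "r = (a'',s'')" by (cases p, cases q, cases r) auto
  have c: "a \<in> carrier R" "s \<in> S" "a' \<in> carrier R" "s' \<in> S" "a'' \<in> carrier R" "s'' \<in> S"
    using assms pq by (auto simp: P_def)
  have cc: "s \<in> carrier R" "s' \<in> carrier R" "s'' \<in> carrier R" using c Sc by auto
  obtain b b' where bb: "b \<in> carrier R" "b' \<in> carrier R" "s \<otimes> b = s' \<otimes> b'" "s \<otimes> b \<in> S" "a \<otimes> b = a' \<otimes> b'"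
    using assms(4) pq unfolding equ_def by auto
  obtain c' c'' where cc2: "c' \<in> carrier R" "c'' \<in> carrier R" "s' \<otimes> c' = s'' \<otimes> c''" "s' \<otimes> c' \<in> S" "a' \<otimes> c' = a'' \<otimes> c''"
    using assms(5) pq unfolding equ_def by auto
  obtain x y where xy: "x \<in> carrier R" "y \<in> S" "(s' \<otimes> b') \<otimes> x = (s' \<otimes> c') \<otimes> y" "(s' \<otimes> b') \<otimes> x \<in> S"
    using L0[of "s' \<otimes> b'" "s' \<otimes> c'"] bb cc2 by metis
  have yc: "y \<in> carrier R" using Sc xy by auto
  have "s' \<otimes> (b' \<otimes> x) = s' \<otimes> (c' \<otimes> y)" using xy(3) xy(1) bb(2) cc2(1) cc yc by (simp only: m_assoc)
  then obtain t where t: "t \<in> S" "b' \<otimes> x \<otimes> t = c' \<otimes> y \<otimes> t"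
    using L1[of s' "b' \<otimes> x" "c' \<otimes> y"] c bb cc2 xy yc by auto
  have tc: "t \<in> carrier R" using Sc t by auto
  note car = c(1,3,5) cc bb(1,2) cc2(1,2) xy(1) yc tc
  show ?thesis unfolding equ_def pq fst_conv snd_conv
  proof (intro bexI conjI)
    show "s \<otimes> (b \<otimes> x \<otimes> t) = s'' \<otimes> (c'' \<otimes> y \<otimes> t)"
    proof -
      have "s \<otimes> (b \<otimes> x \<otimes> t) = (s \<otimes> b) \<otimes> x \<otimes> t" using car by (simp add: m_assoc)
      also have "\<dots> = (s' \<otimes> b') \<otimes> x \<otimes> t" using bb(3) by simp
      also have "\<dots> = s' \<otimes> (b' \<otimes> x \<otimes> t)" using car by (simp add: m_assoc)
      also have "\<dots> = s' \<otimes> (c' \<otimes> y \<otimes> t)" using t(2) by simp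
      also have "\<dots> = (s' \<otimes> c') \<otimes> y \<otimes> t" using car by (simp add: m_assoc)
      also have "\<dots> = (s'' \<otimes> c'') \<otimes> y \<otimes> t" using cc2(3) by simp
      also have "\<dots> = s'' \<otimes> (c'' \<otimes> y \<otimes> t)" using car by (simp add: m_assoc)
      finally show ?thesis .
    qed
    show "s \<otimes> (b \<otimes> x \<otimes> t) \<in> S"
    proof -
      have "s \<otimes> (b \<otimes> x \<otimes> t) = (s \<otimes> b) \<otimes> x \<otimes> t" using car by (simp add: m_assoc)
      also have "\<dots> = (s' \<otimes> b') \<otimes> x \<otimes> t" using bb(3) by simp
      finally show ?thesis using xy(4) t(1) mult_S by simp
    qed
    show "a \<otimes> (b \<otimes> x \<otimes> t) = a'' \<otimes> (c'' \<otimes> y \<otimes> t)"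
    proof -
      have "a \<otimes> (b \<otimes> x \<otimes> t) = (a \<otimes> b) \<otimes> x \<otimes> t" using car by (simp add: m_assoc)
      also have "\<dots> = (a' \<otimes> b') \<otimes> x \<otimes> t" using bb(5) by simp
      also have "\<dots> = a' \<otimes> (b' \<otimes> x \<otimes> t)" using car by (simp add: m_assoc)
      also have "\<dots> = a' \<otimes> (c' \<otimes> y \<otimes> t)" using t(2) by simp
      also have "\<dots> = (a' \<otimes> c') \<otimes> y \<otimes> t" using car by (simp add: m_assoc)
      also have "\<dots> = (a'' \<otimes> c'') \<otimes> y \<otimes> t" using cc2(5) by simp
      also have "\<dots> = a'' \<otimes> (c'' \<otimes> y \<otimes> t)" using car by (simp add: m_assoc)
      finally show ?thesis .
    qed
  qed (use car in auto)
qed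

lemma L2: assumes "a \<in> carrier R" "s \<in> S" "a' \<in> carrier R" "s' \<in> S" "equ (a,s) (a',s')"
  "c \<in> carrier R" "c' \<in> carrier R" "s \<otimes> c = s' \<otimes> c'" "s \<otimes> c \<in> S"
  shows "\<exists>t\<in>S. a \<otimes> c \<otimes> t = a' \<otimes> c' \<otimes> t"
proof -
  obtain b b' where bb: "b \<in> carrier R" "b' \<in> carrier R" "s \<otimes> b = s' \<otimes> b'" "s \<otimes> b \<in> S" "a \<otimes> b = a' \<otimes> b'"
    using assms(5) unfolding equ_def by auto
  obtain x y where xy: "x \<in> carrier R" "y \<in> S" "(s \<otimes> b) \<otimes> x = (s \<otimes> c) \<otimes> y" "(s \<otimes> b) \<otimes> x \<in> S"
    using L0[of "s \<otimes> b" "s \<otimes> c"] bb assms by metis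
  have yc: "y \<in> carrier R" using Sc xy by auto
  have sc: "s \<in> carrier R" "s' \<in> carrier R" using assms Sc by auto
  note car0 = assms(1,3,6,7) bb(1,2) xy(1) yc sc
  have "s \<otimes> (b \<otimes> x) = s \<otimes> (c \<otimes> y)" using xy(3) car0 by (simp add: m_assoc)
  then obtain t1 where t1: "t1 \<in> S" "b \<otimes> x \<otimes> t1 = c \<otimes> y \<otimes> t1"
    using L1[of s "b \<otimes> x" "c \<otimes> y"] car0 assms(2) by auto
  have t1c: "t1 \<in> carrier R" using Sc t1 by auto
  have "s' \<otimes> (b' \<otimes> x \<otimes> t1) = (s \<otimes> b) \<otimes> x \<otimes> t1" using car0 t1c bb(3) by (simp add: m_assoc)
  also have "\<dots> = (s \<otimes> c) \<otimes> y \<otimes> t1" using xy(3) by simp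
  also have "\<dots> = s \<otimes> (c \<otimes> y \<otimes> t1)" using car0 t1c by (simp add: m_assoc)
  also have "\<dots> = s \<otimes> (b \<otimes> x \<otimes> t1)" using t1(2) by simp
  also have "\<dots> = (s \<otimes> b) \<otimes> x \<otimes> t1" using car0 t1c by (simp add: m_assoc)
  also have "\<dots> = (s \<otimes> c) \<otimes> y \<otimes> t1" using xy(3) by simp
  also have "\<dots> = s' \<otimes> (c' \<otimes> y \<otimes> t1)" using car0 t1c assms(8) by (simp add: m_assoc)
  finally have "s' \<otimes> (b' \<otimes> x \<otimes> t1) = s' \<otimes> (c' \<otimes> y \<otimes> t1)" .
  then obtain t2 where t2: "t2 \<in> S" "b' \<otimes> x \<otimes> t1 \<otimes> t2 = c' \<otimes> y \<otimes> t1 \<otimes> t2"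
    using L1[of s' "b' \<otimes> x \<otimes> t1" "c' \<otimes> y \<otimes> t1"] car0 t1c assms(4) by auto
  have t2c: "t2 \<in> carrier R" using Sc t2 by auto
  note car = car0 t1c t2c
  have "a \<otimes> c \<otimes> (y \<otimes> t1 \<otimes> t2) = a \<otimes> (c \<otimes> y \<otimes> t1) \<otimes> t2" using car by (simp add: m_assoc)
  also have "\<dots> = a \<otimes> (b \<otimes> x \<otimes> t1) \<otimes> t2" using t1(2) by simp
  also have "\<dots> = (a \<otimes> b) \<otimes> (x \<otimes> t1 \<otimes> t2)" using car by (simp add: m_assoc)
  also have "\<dots> = (a' \<otimes> b') \<otimes> (x \<otimes> t1 \<otimes> t2)" using bb(5) by simp
  also have "\<dots> = a' \<otimes> (b' \<otimes> x \<otimes> t1 \<otimes> t2)" using car by (simp add: m_assoc)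
  also have "\<dots> = a' \<otimes> (c' \<otimes> y \<otimes> t1 \<otimes> t2)" using t2(2) by simp
  also have "\<dots> = a' \<otimes> c' \<otimes> (y \<otimes> t1 \<otimes> t2)" using car by (simp add: m_assoc)
  finally show ?thesis using mult_S xy(2) t1(1) t2(1) by blast
qed

lemma expand: assumes "a \<in> carrier R" "s \<in> S" "c \<in> carrier R" "s \<otimes> c \<in> S"
  shows "equ (a,s) (a \<otimes> c, s \<otimes> c)"
  unfolding equ_def fst_conv snd_conv
  by (rule bexI[of _ c], rule bexI[of _ \<one>]) (use assms Sc in auto)

definition cls :: "'a \<Rightarrow> 'a \<Rightarrow> ('a \<times> 'a) set" where
  "cls a s = {p \<in> P. equ p (a,s)}"

lemma in_P: "a \<in> carrier R \<Longrightarrow> s \<in> S \<Longrightarrow> (a,s) \<in> P" by (simp add: P_def)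

lemma cls_eq_iff: assumes "a \<in> carrier R" "s \<in> S" "a' \<in> carrier R" "s' \<in> S"
  shows "cls a s = cls a' s' \<longleftrightarrow> equ (a,s) (a',s')"
proof
  assume "cls a s = cls a' s'"
  then have "(a,s) \<in> cls a' s'" using equ_refl[OF in_P[OF assms(1,2)]] in_P[OF assms(1,2)]
    unfolding cls_def by blast
  then show "equ (a,s) (a',s')" unfolding cls_def by auto
next
  assume e: "equ (a,s) (a',s')"
  show "cls a s = cls a' s'" unfolding cls_def
    using e equ_sym equ_trans in_P assms by blast
qed

lemma cls_eqI: "\<lbrakk>a \<in> carrier R; s \<in> S; a' \<in> carrier R; s' \<in> S; equ (a,s) (a',s')\<rbrakk> \<Longrightarrow> cls a s = cls a' s'"
  using cls_eq_iff by blast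

lemma cls_expand: "\<lbrakk>a \<in> carrier R; s \<in> S; c \<in> carrier R; s \<otimes> c \<in> S\<rbrakk> \<Longrightarrow> cls a s = cls (a \<otimes> c) (s \<otimes> c)"
  by (rule cls_eqI) (auto intro: expand)

lemma mem_cls: "(x,y) \<in> cls a s \<longleftrightarrow> x \<in> carrier R \<and> y \<in> S \<and> equ (x,y) (a,s)"
  unfolding cls_def P_def by auto

lemma W_add: assumes "a1 \<in> carrier R" "s1 \<in> S" "a2 \<in> carrier R" "s2 \<in> S" "equ (a1,s1) (a2,s2)"
  "a1' \<in> carrier R" "s1' \<in> S" "a2' \<in> carrier R" "s2' \<in> S" "equ (a1',s1') (a2',s2')"
  "c1 \<in> carrier R" "c1' \<in> carrier R" "s1 \<otimes> c1 = s1' \<otimes> c1'" "s1 \<otimes> c1 \<in> S"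
  "c2 \<in> carrier R" "c2' \<in> carrier R" "s2 \<otimes> c2 = s2' \<otimes> c2'" "s2 \<otimes> c2 \<in> S"
  shows "equ (a1 \<otimes> c1 \<oplus> a1' \<otimes> c1', s1 \<otimes> c1) (a2 \<otimes> c2 \<oplus> a2' \<otimes> c2', s2 \<otimes> c2)"
proof -
  obtain x y where xy: "x \<in> carrier R" "y \<in> S" "(s1 \<otimes> c1) \<otimes> x = (s2 \<otimes> c2) \<otimes> y" "(s1 \<otimes> c1) \<otimes> x \<in> S"
    using L0[of "s1 \<otimes> c1" "s2 \<otimes> c2"] assms by metis
  have yc: "y \<in> carrier R" using Sc xy by auto
  have sc: "s1 \<in> carrier R" "s2 \<in> carrier R" "s1' \<in> carrier R" "s2' \<in> carrier R" using assms Sc by auto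
  note car0 = assms(1,3,6,8,11,12,15,16) xy(1) yc sc
  have e1: "s1 \<otimes> (c1 \<otimes> x) = s2 \<otimes> (c2 \<otimes> y)" "s1 \<otimes> (c1 \<otimes> x) \<in> S"
    using xy(3,4) car0 by (simp_all add: m_assoc)
  obtain t1 where t1: "t1 \<in> S" "a1 \<otimes> (c1 \<otimes> x) \<otimes> t1 = a2 \<otimes> (c2 \<otimes> y) \<otimes> t1"
    using L2[OF assms(1-5) _ _ e1] car0 by auto
  have t1c: "t1 \<in> carrier R" using Sc t1 by auto
  have e2: "s1' \<otimes> (c1' \<otimes> x \<otimes> t1) = s2' \<otimes> (c2' \<otimes> y \<otimes> t1)" "s1' \<otimes> (c1' \<otimes> x \<otimes> t1) \<in> S"
  proof -
    have "s1' \<otimes> (c1' \<otimes> x \<otimes> t1) = (s1 \<otimes> c1) \<otimes> x \<otimes> t1" using car0 t1c assms(13) by (simp add: m_assoc)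
    also have "\<dots> = (s2 \<otimes> c2) \<otimes> y \<otimes> t1" using xy(3) by simp
    also have "\<dots> = s2' \<otimes> (c2' \<otimes> y \<otimes> t1)" using car0 t1c assms(17) by (simp add: m_assoc)
    finally show "s1' \<otimes> (c1' \<otimes> x \<otimes> t1) = s2' \<otimes> (c2' \<otimes> y \<otimes> t1)" .
    have "s1' \<otimes> (c1' \<otimes> x \<otimes> t1) = (s1 \<otimes> c1) \<otimes> x \<otimes> t1" using car0 t1c assms(13) by (simp add: m_assoc)
    then show "s1' \<otimes> (c1' \<otimes> x \<otimes> t1) \<in> S" using xy(4) t1(1) mult_S by simp
  qed
  obtain t2 where t2: "t2 \<in> S" "a1' \<otimes> (c1' \<otimes> x \<otimes> t1) \<otimes> t2 = a2' \<otimes> (c2' \<otimes> y \<otimes> t1) \<otimes> t2"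
    using L2[OF assms(6-10) _ _ e2] car0 t1c by auto
  have t2c: "t2 \<in> carrier R" using Sc t2 by auto
  note car = car0 t1c t2c
  show ?thesis unfolding equ_def fst_conv snd_conv
  proof (intro bexI conjI)
    show "s1 \<otimes> c1 \<otimes> (x \<otimes> t1 \<otimes> t2) = s2 \<otimes> c2 \<otimes> (y \<otimes> t1 \<otimes> t2)"
    proof -
      have "s1 \<otimes> c1 \<otimes> (x \<otimes> t1 \<otimes> t2) = (s1 \<otimes> c1 \<otimes> x) \<otimes> t1 \<otimes> t2" using car by (simp add: m_assoc)
      also have "\<dots> = (s2 \<otimes> c2 \<otimes> y) \<otimes> t1 \<otimes> t2" using xy(3) by simp
      also have "\<dots> = s2 \<otimes> c2 \<otimes> (y \<otimes> t1 \<otimes> t2)" using car by (simp add: m_assoc)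
      finally show ?thesis .
    qed
    show "s1 \<otimes> c1 \<otimes> (x \<otimes> t1 \<otimes> t2) \<in> S"
    proof -
      have "s1 \<otimes> c1 \<otimes> (x \<otimes> t1 \<otimes> t2) = (s1 \<otimes> c1 \<otimes> x) \<otimes> t1 \<otimes> t2" using car by (simp add: m_assoc)
      then show ?thesis using xy(4) t1(1) t2(1) mult_S by simp
    qed
    have A: "a1 \<otimes> c1 \<otimes> (x \<otimes> t1 \<otimes> t2) = a2 \<otimes> c2 \<otimes> (y \<otimes> t1 \<otimes> t2)"
    proof -
      have "a1 \<otimes> c1 \<otimes> (x \<otimes> t1 \<otimes> t2) = (a1 \<otimes> (c1 \<otimes> x) \<otimes> t1) \<otimes> t2" using car by (simp add: m_assoc)
      also have "\<dots> = (a2 \<otimes> (c2 \<otimes> y) \<otimes> t1) \<otimes> t2" using t1(2) by simp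
      also have "\<dots> = a2 \<otimes> c2 \<otimes> (y \<otimes> t1 \<otimes> t2)" using car by (simp add: m_assoc)
      finally show ?thesis .
    qed
    have B: "a1' \<otimes> c1' \<otimes> (x \<otimes> t1 \<otimes> t2) = a2' \<otimes> c2' \<otimes> (y \<otimes> t1 \<otimes> t2)"
    proof -
      have "a1' \<otimes> c1' \<otimes> (x \<otimes> t1 \<otimes> t2) = a1' \<otimes> (c1' \<otimes> x \<otimes> t1) \<otimes> t2" using car by (simp add: m_assoc)
      also have "\<dots> = a2' \<otimes> (c2' \<otimes> y \<otimes> t1) \<otimes> t2" using t2(2) by simp
      also have "\<dots> = a2' \<otimes> c2' \<otimes> (y \<otimes> t1 \<otimes> t2)" using car by (simp add: m_assoc)
      finally show ?thesis .
    qed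
    show "(a1 \<otimes> c1 \<oplus> a1' \<otimes> c1') \<otimes> (x \<otimes> t1 \<otimes> t2) = (a2 \<otimes> c2 \<oplus> a2' \<otimes> c2') \<otimes> (y \<otimes> t1 \<otimes> t2)"
      using car A B by (simp add: l_distr)
  qed (use car in auto)
qed

definition fadd :: "('a \<times> 'a) set \<Rightarrow> ('a \<times> 'a) set \<Rightarrow> ('a \<times> 'a) set" where
  "fadd U V = {p \<in> P. \<exists>a s a' s' b b'. (a,s) \<in> U \<and> (a',s') \<in> V \<and> b \<in> carrier R \<and> b' \<in> carrier R \<and>
     s \<otimes> b = s' \<otimes> b' \<and> s \<otimes> b \<in> S \<and> equ p (a \<otimes> b \<oplus> a' \<otimes> b', s \<otimes> b)}"


lemma fadd_cls: assumes "a \<in> carrier R" "s \<in> S" "a' \<in> carrier R" "s' \<in> S"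
  "b \<in> carrier R" "b' \<in> carrier R" "s \<otimes> b = s' \<otimes> b'" "s \<otimes> b \<in> S"
  shows "fadd (cls a s) (cls a' s') = cls (a \<otimes> b \<oplus> a' \<otimes> b') (s \<otimes> b)"
proof -
  have sc: "s \<in> carrier R" "s' \<in> carrier R" using assms Sc by auto
  have tP: "(a \<otimes> b \<oplus> a' \<otimes> b', s \<otimes> b) \<in> P" using assms sc by (simp add: P_def)
  show ?thesis
  proof (intro Set.set_eqI iffI)
    fix p assume "p \<in> fadd (cls a s) (cls a' s')"
    then obtain a1 s1 a1' s1' c c' where h: "p \<in> P" "(a1,s1) \<in> cls a s" "(a1',s1') \<in> cls a' s'"
      "c \<in> carrier R" "c' \<in> carrier R" "s1 \<otimes> c = s1' \<otimes> c'" "s1 \<otimes> c \<in> S"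
      "equ p (a1 \<otimes> c \<oplus> a1' \<otimes> c', s1 \<otimes> c)" unfolding fadd_def by blast
    have m: "a1 \<in> carrier R" "s1 \<in> S" "equ (a1,s1) (a,s)" "a1' \<in> carrier R" "s1' \<in> S" "equ (a1',s1') (a',s')"
      using h(2,3) mem_cls by auto
    have W: "equ (a1 \<otimes> c \<oplus> a1' \<otimes> c', s1 \<otimes> c) (a \<otimes> b \<oplus> a' \<otimes> b', s \<otimes> b)"
      by (rule W_add) (use m h assms in auto)
    have "(a1 \<otimes> c \<oplus> a1' \<otimes> c', s1 \<otimes> c) \<in> P" using m h Sc by (auto simp: P_def)
    then have "equ p (a \<otimes> b \<oplus> a' \<otimes> b', s \<otimes> b)" using equ_trans h(1,8) W tP by blast
    then show "p \<in> cls (a \<otimes> b \<oplus> a' \<otimes> b') (s \<otimes> b)" using h(1) unfolding cls_def by auto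
  next
    fix p assume "p \<in> cls (a \<otimes> b \<oplus> a' \<otimes> b') (s \<otimes> b)"
    then have "p \<in> P" "equ p (a \<otimes> b \<oplus> a' \<otimes> b', s \<otimes> b)" unfolding cls_def by auto
    moreover have "(a,s) \<in> cls a s" "(a',s') \<in> cls a' s'" using assms equ_refl in_P mem_cls by auto
    ultimately show "p \<in> fadd (cls a s) (cls a' s')" unfolding fadd_def using assms by blast
  qed
qed

lemma choice: assumes "a \<in> carrier R" "s \<in> S" "a' \<in> carrier R" "s' \<in> S"
  "t \<in> S" "b \<in> carrier R" "a' \<otimes> t = s \<otimes> b" "t' \<in> S" "b' \<in> carrier R" "a' \<otimes> t' = s \<otimes> b'"
  shows "equ (a \<otimes> b, s' \<otimes> t) (a \<otimes> b', s' \<otimes> t')"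
proof -
  obtain x y where xy: "x \<in> carrier R" "y \<in> S" "t \<otimes> x = t' \<otimes> y" "t \<otimes> x \<in> S"
    using L0[of t t'] assms by metis
  have sc: "s \<in> carrier R" "s' \<in> carrier R" "t \<in> carrier R" "t' \<in> carrier R" "y \<in> carrier R" using assms xy Sc by auto
  note car0 = sc assms(1,3,6,9) xy(1)
  have "s \<otimes> (b \<otimes> x) = (s \<otimes> b) \<otimes> x" using car0 by (simp add: m_assoc)
  also have "\<dots> = a' \<otimes> (t \<otimes> x)" using assms(7) car0 by (simp add: m_assoc[symmetric])
  also have "\<dots> = a' \<otimes> (t' \<otimes> y)" using xy(3) by simp
  also have "\<dots> = (s \<otimes> b') \<otimes> y" using assms(10) car0 by (simp add: m_assoc[symmetric])
  also have "\<dots> = s \<otimes> (b' \<otimes> y)" using car0 by (simp add: m_assoc)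
  finally obtain u where u: "u \<in> S" "b \<otimes> x \<otimes> u = b' \<otimes> y \<otimes> u"
    using L1[of s "b \<otimes> x" "b' \<otimes> y"] car0 assms(2) by auto
  have uc: "u \<in> carrier R" using u Sc by auto
  note car = car0 uc
  show ?thesis unfolding equ_def fst_conv snd_conv
  proof (intro bexI conjI)
    show "s' \<otimes> t \<otimes> (x \<otimes> u) = s' \<otimes> t' \<otimes> (y \<otimes> u)"
    proof -
      have "s' \<otimes> t \<otimes> (x \<otimes> u) = s' \<otimes> (t \<otimes> x) \<otimes> u" using car by (simp add: m_assoc)
      also have "\<dots> = s' \<otimes> (t' \<otimes> y) \<otimes> u" using xy(3) by simp
      finally show ?thesis using car by (simp add: m_assoc)
    qed
    show "s' \<otimes> t \<otimes> (x \<otimes> u) \<in> S"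
    proof -
      have "s' \<otimes> t \<otimes> (x \<otimes> u) = s' \<otimes> (t \<otimes> x) \<otimes> u" using car by (simp add: m_assoc)
      then show ?thesis using mult_S assms(4) xy(4) u(1) by simp
    qed
    show "a \<otimes> b \<otimes> (x \<otimes> u) = a \<otimes> b' \<otimes> (y \<otimes> u)"
    proof -
      have "a \<otimes> b \<otimes> (x \<otimes> u) = a \<otimes> (b \<otimes> x \<otimes> u)" using car by (simp add: m_assoc)
      also have "\<dots> = a \<otimes> (b' \<otimes> y \<otimes> u)" using u(2) by simp
      finally show ?thesis using car by (simp add: m_assoc)
    qed
  qed (use car in auto)
qed

lemma expR: assumes "a \<in> carrier R" "s \<in> S" "a' \<in> carrier R" "s' \<in> S" "c \<in> carrier R" "s' \<otimes> c \<in> S"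
  "t \<in> S" "b \<in> carrier R" "a' \<otimes> t = s \<otimes> b" "t2 \<in> S" "b2 \<in> carrier R" "(a' \<otimes> c) \<otimes> t2 = s \<otimes> b2"
  shows "equ (a \<otimes> b, s' \<otimes> t) (a \<otimes> b2, (s' \<otimes> c) \<otimes> t2)"
proof -
  have sc: "s \<in> carrier R" "s' \<in> carrier R" "t \<in> carrier R" "t2 \<in> carrier R" using assms Sc by auto
  obtain t3 x where tx: "t3 \<in> S" "x \<in> carrier R" "c \<otimes> t3 = t \<otimes> x" using ore[OF assms(5,7)] by blast
  have t3c: "t3 \<in> carrier R" using tx Sc by auto
  note car = sc t3c tx(2) assms(1,3,5,8,11)
  have e1: "(a' \<otimes> c) \<otimes> t3 = s \<otimes> (b \<otimes> x)"
  proof -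
    have "(a' \<otimes> c) \<otimes> t3 = a' \<otimes> (c \<otimes> t3)" using car by (simp add: m_assoc)
    also have "\<dots> = a' \<otimes> (t \<otimes> x)" using tx(3) by simp
    also have "\<dots> = (s \<otimes> b) \<otimes> x" using assms(9) car by (simp add: m_assoc[symmetric])
    finally show ?thesis using car by (simp add: m_assoc)
  qed
  have eqd: "(s' \<otimes> c) \<otimes> t3 = s' \<otimes> t \<otimes> x"
  proof -
    have "(s' \<otimes> c) \<otimes> t3 = s' \<otimes> (c \<otimes> t3)" using car by (simp add: m_assoc)
    also have "\<dots> = s' \<otimes> (t \<otimes> x)" using tx(3) by simp
    finally show ?thesis using car by (simp add: m_assoc)
  qed
  have inS: "s' \<otimes> t \<otimes> x \<in> S" using eqd[symmetric] mult_S assms(6) tx(1) by simp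
  have c1: "equ (a \<otimes> (b \<otimes> x), (s' \<otimes> c) \<otimes> t3) (a \<otimes> b2, (s' \<otimes> c) \<otimes> t2)"
    by (rule choice) (use assms car tx e1 in auto)
  have c2: "equ (a \<otimes> b, s' \<otimes> t) (a \<otimes> b \<otimes> x, s' \<otimes> t \<otimes> x)"
    by (rule expand) (use assms car inS mult_S in auto)
  have pe: "(a \<otimes> b \<otimes> x, s' \<otimes> t \<otimes> x) = (a \<otimes> (b \<otimes> x), (s' \<otimes> c) \<otimes> t3)"
    using eqd car by (simp add: m_assoc)
  show ?thesis
    by (rule equ_trans[OF _ _ _ c2 c1[folded pe]]) (use assms car inS mult_S in \<open>auto simp: P_def\<close>)
qed

lemma expL: assumes "a \<in> carrier R" "s \<in> S" "a' \<in> carrier R" "s' \<in> S" "c \<in> carrier R" "s \<otimes> c \<in> S"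
  "t \<in> S" "b \<in> carrier R" "a' \<otimes> t = s \<otimes> b" "t2 \<in> S" "b2 \<in> carrier R" "a' \<otimes> t2 = (s \<otimes> c) \<otimes> b2"
  shows "equ (a \<otimes> b, s' \<otimes> t) ((a \<otimes> c) \<otimes> b2, s' \<otimes> t2)"
proof -
  have sc: "s \<in> carrier R" using assms Sc by auto
  have "a' \<otimes> t2 = s \<otimes> (c \<otimes> b2)" using assms(12) sc assms by (simp add: m_assoc)
  from choice[OF assms(1-4,7,8,9,10) _ this] assms
  show ?thesis by (simp add: m_assoc)
qed

lemma W_mul: assumes "a1 \<in> carrier R" "s1 \<in> S" "a2 \<in> carrier R" "s2 \<in> S" "equ (a1,s1) (a2,s2)"
  "a1' \<in> carrier R" "s1' \<in> S" "a2' \<in> carrier R" "s2' \<in> S" "equ (a1',s1') (a2',s2')"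
  "t1 \<in> S" "b1 \<in> carrier R" "a1' \<otimes> t1 = s1 \<otimes> b1"
  "t2 \<in> S" "b2 \<in> carrier R" "a2' \<otimes> t2 = s2 \<otimes> b2"
  shows "equ (a1 \<otimes> b1, s1' \<otimes> t1) (a2 \<otimes> b2, s2' \<otimes> t2)"
proof -
  obtain \<beta> \<beta>' where be: "\<beta> \<in> carrier R" "\<beta>' \<in> carrier R" "s1 \<otimes> \<beta> = s2 \<otimes> \<beta>'" "s1 \<otimes> \<beta> \<in> S" "a1 \<otimes> \<beta> = a2 \<otimes> \<beta>'"
    using assms(5) unfolding equ_def by auto
  obtain \<gamma> \<gamma>' where ga: "\<gamma> \<in> carrier R" "\<gamma>' \<in> carrier R" "s1' \<otimes> \<gamma> = s2' \<otimes> \<gamma>'" "s1' \<otimes> \<gamma> \<in> S" "a1' \<otimes> \<gamma> = a2' \<otimes> \<gamma>'"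
    using assms(10) unfolding equ_def by auto
  obtain t3 b3 where tb3: "t3 \<in> S" "b3 \<in> carrier R" "a1' \<otimes> t3 = (s1 \<otimes> \<beta>) \<otimes> b3"
    using ore[OF assms(6) be(4)] by blast
  obtain t4 b4 where tb4: "t4 \<in> S" "b4 \<in> carrier R" "a1' \<otimes> t4 = s2 \<otimes> b4"
    using ore[OF assms(6) assms(4)] by blast
  have a1g: "a1' \<otimes> \<gamma> \<in> carrier R" using assms ga by simp
  obtain t5 b5 where tb5: "t5 \<in> S" "b5 \<in> carrier R" "(a1' \<otimes> \<gamma>) \<otimes> t5 = s2 \<otimes> b5"
    using ore[OF a1g assms(4)] by blast
  have sc: "s1 \<in> carrier R" "s2 \<in> carrier R" "s1' \<in> carrier R" "s2' \<in> carrier R"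
     "t1 \<in> carrier R" "t2 \<in> carrier R" "t3 \<in> carrier R" "t4 \<in> carrier R" "t5 \<in> carrier R"
    using assms tb3 tb4 tb5 Sc by auto
  note car = sc assms(1,3,6,8,12,15) be(1,2) ga(1,2) tb3(2) tb4(2) tb5(2)
  have e13: "equ (a1 \<otimes> b1, s1' \<otimes> t1) ((a1 \<otimes> \<beta>) \<otimes> b3, s1' \<otimes> t3)"
    by (rule expL) (use assms be tb3 in auto)
  have e43: "equ (a2 \<otimes> b4, s1' \<otimes> t4) ((a2 \<otimes> \<beta>') \<otimes> b3, s1' \<otimes> t3)"
    by (rule expL) (use assms be tb3 tb4 in auto)
  have e45: "equ (a2 \<otimes> b4, s1' \<otimes> t4) (a2 \<otimes> b5, (s1' \<otimes> \<gamma>) \<otimes> t5)"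
    by (rule expR) (use assms ga tb4 tb5 in auto)
  have e25: "equ (a2 \<otimes> b2, s2' \<otimes> t2) (a2 \<otimes> b5, (s2' \<otimes> \<gamma>') \<otimes> t5)"
    by (rule expR) (use assms ga tb5 in auto)
  have P1: "(a1 \<otimes> b1, s1' \<otimes> t1) \<in> P" "((a1 \<otimes> \<beta>) \<otimes> b3, s1' \<otimes> t3) \<in> P"
    "(a2 \<otimes> b4, s1' \<otimes> t4) \<in> P" "(a2 \<otimes> b5, (s1' \<otimes> \<gamma>) \<otimes> t5) \<in> P" "(a2 \<otimes> b2, s2' \<otimes> t2) \<in> P"
    using car mult_S assms tb3 tb4 tb5 ga by (auto simp: P_def)
  have "equ (a1 \<otimes> b1, s1' \<otimes> t1) (a2 \<otimes> b4, s1' \<otimes> t4)"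
    using equ_trans[OF P1(1,2,3) e13 equ_sym[OF e43[folded be(5)]]] .
  then have "equ (a1 \<otimes> b1, s1' \<otimes> t1) (a2 \<otimes> b5, (s1' \<otimes> \<gamma>) \<otimes> t5)"
    using equ_trans[OF P1(1,3,4) _ e45] by blast
  then show ?thesis
    using equ_trans[OF P1(1,4,5) _ equ_sym[OF e25[folded ga(3)]]] by blast
qed

definition fmul :: "('a \<times> 'a) set \<Rightarrow> ('a \<times> 'a) set \<Rightarrow> ('a \<times> 'a) set" where
  "fmul U V = {p \<in> P. \<exists>a s a' s' b t. (a,s) \<in> U \<and> (a',s') \<in> V \<and> b \<in> carrier R \<and> t \<in> S \<and>
     a' \<otimes> t = s \<otimes> b \<and> equ p (a \<otimes> b, s' \<otimes> t)}"

lemma fmul_cls: assumes "a \<in> carrier R" "s \<in> S" "a' \<in> carrier R" "s' \<in> S"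
  "b \<in> carrier R" "t \<in> S" "a' \<otimes> t = s \<otimes> b"
  shows "fmul (cls a s) (cls a' s') = cls (a \<otimes> b) (s' \<otimes> t)"
proof -
  have sc: "s \<in> carrier R" "s' \<in> carrier R" "t \<in> carrier R" using assms Sc by auto
  have tP: "(a \<otimes> b, s' \<otimes> t) \<in> P" using assms sc mult_S by (simp add: P_def)
  show ?thesis
  proof (intro Set.set_eqI iffI)
    fix p assume "p \<in> fmul (cls a s) (cls a' s')"
    then obtain a1 s1 a1' s1' c u where h: "p \<in> P" "(a1,s1) \<in> cls a s" "(a1',s1') \<in> cls a' s'"
      "c \<in> carrier R" "u \<in> S" "a1' \<otimes> u = s1 \<otimes> c" "equ p (a1 \<otimes> c, s1' \<otimes> u)" unfolding fmul_def by blast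
    have m: "a1 \<in> carrier R" "s1 \<in> S" "equ (a1,s1) (a,s)" "a1' \<in> carrier R" "s1' \<in> S" "equ (a1',s1') (a',s')"
      using h(2,3) mem_cls by auto
    have W: "equ (a1 \<otimes> c, s1' \<otimes> u) (a \<otimes> b, s' \<otimes> t)"
      by (rule W_mul) (use m h assms in auto)
    have "(a1 \<otimes> c, s1' \<otimes> u) \<in> P" using m h Sc mult_S by (auto simp: P_def)
    then have "equ p (a \<otimes> b, s' \<otimes> t)" using equ_trans h(1,7) W tP by blast
    then show "p \<in> cls (a \<otimes> b) (s' \<otimes> t)" using h(1) unfolding cls_def by auto
  next
    fix p assume "p \<in> cls (a \<otimes> b) (s' \<otimes> t)"
    then have "p \<in> P" "equ p (a \<otimes> b, s' \<otimes> t)" unfolding cls_def by auto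
    moreover have "(a,s) \<in> cls a s" "(a',s') \<in> cls a' s'" using assms equ_refl in_P mem_cls by auto
    ultimately show "p \<in> fmul (cls a s) (cls a' s')" unfolding fmul_def using assms by blast
  qed
qed

lemma modR: "module C_ring R" using cx unfolding cx_algebra_def by auto
lemma C_simps[simp]: "carrier C_ring = UNIV" "ring.add C_ring = (+)" "monoid.mult C_ring = (*)" "monoid.one C_ring = 1"
  "ring.zero C_ring = 0" by (simp_all add: C_ring_def)
lemma sm_closed: "x \<in> carrier R \<Longrightarrow> c \<odot>\<^bsub>R\<^esub> x \<in> carrier R"
  using module.smult_closed[OF modR] by simp
lemma sm_l: "x \<in> carrier R \<Longrightarrow> y \<in> carrier R \<Longrightarrow> (c \<odot>\<^bsub>R\<^esub> x) \<otimes> y = c \<odot>\<^bsub>R\<^esub> (x \<otimes> y)"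
  using cx unfolding cx_algebra_def by auto
lemma sm_r: "x \<in> carrier R \<Longrightarrow> y \<in> carrier R \<Longrightarrow> x \<otimes> (c \<odot>\<^bsub>R\<^esub> y) = c \<odot>\<^bsub>R\<^esub> (x \<otimes> y)"
  using cx unfolding cx_algebra_def by auto

definition fsm :: "complex \<Rightarrow> ('a \<times> 'a) set \<Rightarrow> ('a \<times> 'a) set" where
  "fsm c U = {p \<in> P. \<exists>a s. (a,s) \<in> U \<and> equ p (c \<odot>\<^bsub>R\<^esub> a, s)}"

lemma equ_sm: assumes "a \<in> carrier R" "a' \<in> carrier R" "equ (a,s) (a',s')"
  shows "equ (c \<odot>\<^bsub>R\<^esub> a, s) (c \<odot>\<^bsub>R\<^esub> a', s')"
proof -
  obtain b b' where bb: "b \<in> carrier R" "b' \<in> carrier R" "s \<otimes> b = s' \<otimes> b'" "s \<otimes> b \<in> S" "a \<otimes> b = a' \<otimes> b'"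
    using assms(3) unfolding equ_def by auto
  have "(c \<odot>\<^bsub>R\<^esub> a) \<otimes> b = (c \<odot>\<^bsub>R\<^esub> a') \<otimes> b'" using bb assms by (simp add: sm_l)
  then show ?thesis unfolding equ_def fst_conv snd_conv using bb by blast
qed

lemma fsm_cls: assumes "a \<in> carrier R" "s \<in> S"
  shows "fsm c (cls a s) = cls (c \<odot>\<^bsub>R\<^esub> a) s"
proof (intro Set.set_eqI iffI)
  fix p assume "p \<in> fsm c (cls a s)"
  then obtain a1 s1 where h: "p \<in> P" "(a1,s1) \<in> cls a s" "equ p (c \<odot>\<^bsub>R\<^esub> a1, s1)" unfolding fsm_def by blast
  have m: "a1 \<in> carrier R" "s1 \<in> S" "equ (a1,s1) (a,s)" using h(2) mem_cls by auto
  have "equ p (c \<odot>\<^bsub>R\<^esub> a, s)"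
    by (rule equ_trans[OF h(1) _ _ h(3) equ_sm[OF m(1) assms(1) m(3)]]) (use m assms sm_closed in \<open>auto simp: P_def\<close>)
  then show "p \<in> cls (c \<odot>\<^bsub>R\<^esub> a) s" using h(1) unfolding cls_def by auto
next
  fix p assume "p \<in> cls (c \<odot>\<^bsub>R\<^esub> a) s"
  then have "p \<in> P" "equ p (c \<odot>\<^bsub>R\<^esub> a, s)" unfolding cls_def by auto
  moreover have "(a,s) \<in> cls a s" using assms equ_refl in_P mem_cls by auto
  ultimately show "p \<in> fsm c (cls a s)" unfolding fsm_def by blast
qed

definition Loc :: "(complex, ('a \<times> 'a) set) module" where
  "Loc = \<lparr>carrier = {cls a s | a s. a \<in> carrier R \<and> s \<in> S}, monoid.mult = fmul, monoid.one = cls \<one> \<one>,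
     ring.zero = cls \<zero> \<one>, ring.add = fadd, module.smult = fsm\<rparr>"

lemma Loc_simps[simp]: "carrier Loc = {cls a s | a s. a \<in> carrier R \<and> s \<in> S}"
  "monoid.mult Loc = fmul" "monoid.one Loc = cls \<one> \<one>" "ring.zero Loc = cls \<zero> \<one>" "ring.add Loc = fadd"
  "module.smult Loc = fsm"
  by (simp_all add: Loc_def)

lemma cls_in: "a \<in> carrier R \<Longrightarrow> s \<in> S \<Longrightarrow> cls a s \<in> carrier Loc" by auto

lemma common2: assumes "s \<in> S" "s' \<in> S" "a \<in> carrier R" "a' \<in> carrier R"
  obtains d x x' where "d \<in> S" "x \<in> carrier R" "x' \<in> carrier R" "cls a s = cls x d" "cls a' s' = cls x' d"
proof -
  obtain b t where bt: "b \<in> carrier R" "t \<in> S" "s \<otimes> b = s' \<otimes> t" "s \<otimes> b \<in> S" using L0[OF assms(1,2)] by blast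
  have tc: "t \<in> carrier R" using bt Sc by auto
  have "cls a s = cls (a \<otimes> b) (s \<otimes> b)" using cls_expand assms bt by auto
  moreover have "cls a' s' = cls (a' \<otimes> t) (s \<otimes> b)" using cls_expand[of a' s' t] assms bt tc by auto
  ultimately show ?thesis using bt assms tc by (intro that[of "s \<otimes> b" "a \<otimes> b" "a' \<otimes> t"]) auto
qed

lemma fadd_same: "a \<in> carrier R \<Longrightarrow> a' \<in> carrier R \<Longrightarrow> d \<in> S \<Longrightarrow> fadd (cls a d) (cls a' d) = cls (a \<oplus> a') d"
  using fadd_cls[of a d a' d \<one> \<one>] Sc by auto

lemma cls_zero: "s \<in> S \<Longrightarrow> cls \<zero> \<one> = cls \<zero> s"
  using cls_expand[of \<zero> \<one> s] one_S Sc by auto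

lemma fadd_closed: "x \<in> carrier Loc \<Longrightarrow> y \<in> carrier Loc \<Longrightarrow> fadd x y \<in> carrier Loc"
proof -
  assume "x \<in> carrier Loc" "y \<in> carrier Loc"
  then obtain a s a' s' where h: "a \<in> carrier R" "s \<in> S" "a' \<in> carrier R" "s' \<in> S" "x = cls a s" "y = cls a' s'" by auto
  obtain d z z' where "d \<in> S" "z \<in> carrier R" "z' \<in> carrier R" "cls a s = cls z d" "cls a' s' = cls z' d"
    using common2[OF h(2,4,1,3)] .
  then show ?thesis using h fadd_same by auto
qed

lemma fmul_closed: "x \<in> carrier Loc \<Longrightarrow> y \<in> carrier Loc \<Longrightarrow> fmul x y \<in> carrier Loc"
proof -
  assume "x \<in> carrier Loc" "y \<in> carrier Loc"
  then obtain a s a' s' where h: "a \<in> carrier R" "s \<in> S" "a' \<in> carrier R" "s' \<in> S" "x = cls a s" "y = cls a' s'" by auto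
  obtain t b where "t \<in> S" "b \<in> carrier R" "a' \<otimes> t = s \<otimes> b" using ore[OF h(3,2)] by blast
  then have "fmul x y = cls (a \<otimes> b) (s' \<otimes> t)" using h fmul_cls[of a s a' s' b t] by auto
  moreover have "cls (a \<otimes> b) (s' \<otimes> t) \<in> carrier Loc"
    by (rule cls_in) (use h \<open>t \<in> S\<close> \<open>b \<in> carrier R\<close> mult_S in auto)
  ultimately show ?thesis by simp
qed

lemma LocE: assumes "x \<in> carrier Loc" obtains a s where "a \<in> carrier R" "s \<in> S" "x = cls a s"
  using assms by auto

lemma common3: assumes "s1 \<in> S" "s2 \<in> S" "s3 \<in> S" "a1 \<in> carrier R" "a2 \<in> carrier R" "a3 \<in> carrier R"
  obtains D x1 x2 x3 where "D \<in> S" "x1 \<in> carrier R" "x2 \<in> carrier R" "x3 \<in> carrier R"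
    "cls a1 s1 = cls x1 D" "cls a2 s2 = cls x2 D" "cls a3 s3 = cls x3 D"
proof -
  obtain b1 t1 where 1: "b1 \<in> carrier R" "t1 \<in> S" "s1 \<otimes> b1 = s2 \<otimes> t1" "s1 \<otimes> b1 \<in> S" using L0[OF assms(1,2)] by blast
  obtain b2 t2 where 2: "b2 \<in> carrier R" "t2 \<in> S" "(s1 \<otimes> b1) \<otimes> b2 = s3 \<otimes> t2" "(s1 \<otimes> b1) \<otimes> b2 \<in> S"
    using L0[OF 1(4) assms(3)] by blast
  have sc: "s1 \<in> carrier R" "s2 \<in> carrier R" "s3 \<in> carrier R" "t1 \<in> carrier R" "t2 \<in> carrier R" using assms 1 2 Sc by auto
  define D where "D = (s1 \<otimes> b1) \<otimes> b2"
  have e1: "s1 \<otimes> (b1 \<otimes> b2) = D" unfolding D_def using sc 1(1) 2(1) by (simp add: m_assoc)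
  have e2: "s2 \<otimes> (t1 \<otimes> b2) = D" unfolding D_def using sc 1(1,3) 2(1) by (simp add: m_assoc[symmetric])
  have e3: "s3 \<otimes> t2 = D" using 2 D_def by simp
  have DS: "D \<in> S" using 2 D_def by simp
  have "cls a1 s1 = cls (a1 \<otimes> (b1 \<otimes> b2)) D" using cls_expand[of a1 s1 "b1 \<otimes> b2"] e1 DS assms 1 2 by simp
  moreover have "cls a2 s2 = cls (a2 \<otimes> (t1 \<otimes> b2)) D" using cls_expand[of a2 s2 "t1 \<otimes> b2"] e2 DS assms 1 2 sc by simp
  moreover have "cls a3 s3 = cls (a3 \<otimes> t2) D" using cls_expand[of a3 s3 t2] e3 DS assms 1 2 sc by simp
  ultimately show ?thesis using DS assms 1 2 sc by (intro that[of D "a1 \<otimes> (b1 \<otimes> b2)" "a2 \<otimes> (t1 \<otimes> b2)" "a3 \<otimes> t2"]) auto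
qed

lemma Loc_abelian: "abelian_group Loc"
proof (rule abelian_groupI)
  fix x y assume "x \<in> carrier Loc" "y \<in> carrier Loc"
  then show "x \<oplus>\<^bsub>Loc\<^esub> y \<in> carrier Loc" using fadd_closed by simp
next
  show "\<zero>\<^bsub>Loc\<^esub> \<in> carrier Loc" using cls_in one_S by simp
next
  fix x y z assume "x \<in> carrier Loc" "y \<in> carrier Loc" "z \<in> carrier Loc"
  then obtain a1 s1 a2 s2 a3 s3 where h: "a1 \<in> carrier R" "s1 \<in> S" "x = cls a1 s1" "a2 \<in> carrier R" "s2 \<in> S" "y = cls a2 s2"
    "a3 \<in> carrier R" "s3 \<in> S" "z = cls a3 s3" by (metis LocE)
  obtain D x1 x2 x3 where c: "D \<in> S" "x1 \<in> carrier R" "x2 \<in> carrier R" "x3 \<in> carrier R"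
    "cls a1 s1 = cls x1 D" "cls a2 s2 = cls x2 D" "cls a3 s3 = cls x3 D" using common3[OF h(2,5,8,1,4,7)] .
  show "(x \<oplus>\<^bsub>Loc\<^esub> y) \<oplus>\<^bsub>Loc\<^esub> z = x \<oplus>\<^bsub>Loc\<^esub> (y \<oplus>\<^bsub>Loc\<^esub> z)"
    using c h by (simp add: fadd_same a_assoc)
next
  fix x y assume "x \<in> carrier Loc" "y \<in> carrier Loc"
  then obtain a1 s1 a2 s2 where h: "a1 \<in> carrier R" "s1 \<in> S" "x = cls a1 s1" "a2 \<in> carrier R" "s2 \<in> S" "y = cls a2 s2"
    by (metis LocE)
  obtain D x1 x2 where c: "D \<in> S" "x1 \<in> carrier R" "x2 \<in> carrier R" "cls a1 s1 = cls x1 D" "cls a2 s2 = cls x2 D"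
    using common2[OF h(2,5,1,4)] .
  show "x \<oplus>\<^bsub>Loc\<^esub> y = y \<oplus>\<^bsub>Loc\<^esub> x" using c h by (simp add: fadd_same a_comm)
next
  fix x assume "x \<in> carrier Loc"
  then obtain a s where h: "a \<in> carrier R" "s \<in> S" "x = cls a s" by (metis LocE)
  show "\<zero>\<^bsub>Loc\<^esub> \<oplus>\<^bsub>Loc\<^esub> x = x" using h cls_zero[OF h(2)] by (simp add: fadd_same)
next
  fix x assume "x \<in> carrier Loc"
  then obtain a s where h: "a \<in> carrier R" "s \<in> S" "x = cls a s" by (metis LocE)
  have "cls (\<ominus> a) s \<in> carrier Loc" using h by (intro cls_in) auto
  moreover have "fadd (cls (\<ominus> a) s) x = \<zero>\<^bsub>Loc\<^esub>" using h cls_zero[OF h(2)] by (simp add: fadd_same l_neg)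
  ultimately show "\<exists>y\<in>carrier Loc. y \<oplus>\<^bsub>Loc\<^esub> x = \<zero>\<^bsub>Loc\<^esub>" by auto
qed

lemma fmul_one_l: "a \<in> carrier R \<Longrightarrow> s \<in> S \<Longrightarrow> fmul (cls \<one> \<one>) (cls a s) = cls a s"
  using fmul_cls[of \<one> \<one> a s a \<one>] one_S Sc by auto
lemma fmul_one_r: "a \<in> carrier R \<Longrightarrow> s \<in> S \<Longrightarrow> fmul (cls a s) (cls \<one> \<one>) = cls a s"
  using fmul_cls[of a s \<one> \<one> \<one> s] one_S Sc by auto

lemma Loc_monoid: "monoid Loc"
proof (rule monoidI)
  fix x y assume "x \<in> carrier Loc" "y \<in> carrier Loc"
  then show "x \<otimes>\<^bsub>Loc\<^esub> y \<in> carrier Loc" using fmul_closed by simp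
next
  show "\<one>\<^bsub>Loc\<^esub> \<in> carrier Loc" using cls_in one_S by simp
next
  fix x y z assume "x \<in> carrier Loc" "y \<in> carrier Loc" "z \<in> carrier Loc"
  then obtain a1 s1 a2 s2 a3 s3 where h: "a1 \<in> carrier R" "s1 \<in> S" "x = cls a1 s1" "a2 \<in> carrier R" "s2 \<in> S" "y = cls a2 s2"
    "a3 \<in> carrier R" "s3 \<in> S" "z = cls a3 s3" by (metis LocE)
  obtain t b where tb: "t \<in> S" "b \<in> carrier R" "a2 \<otimes> t = s1 \<otimes> b" using ore[OF h(4,2)] by blast
  have s2t: "s2 \<otimes> t \<in> S" using mult_S h tb by auto
  obtain t' b' where tb': "t' \<in> S" "b' \<in> carrier R" "a3 \<otimes> t' = (s2 \<otimes> t) \<otimes> b'" using ore[OF h(7) s2t] by blast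
  have sc: "s1 \<in> carrier R" "s2 \<in> carrier R" "s3 \<in> carrier R" "t \<in> carrier R" "t' \<in> carrier R"
    using h tb tb' Sc by auto
  have xy: "fmul x y = cls (a1 \<otimes> b) (s2 \<otimes> t)" using fmul_cls h tb by auto
  have xyz: "fmul (fmul x y) z = cls (a1 \<otimes> b \<otimes> b') (s3 \<otimes> t')"
    unfolding xy using fmul_cls[of "a1 \<otimes> b" "s2 \<otimes> t" a3 s3 b' t'] h tb tb' s2t by auto
  have e: "a3 \<otimes> t' = s2 \<otimes> (t \<otimes> b')" using tb' sc by (simp add: m_assoc)
  have yz: "fmul y z = cls (a2 \<otimes> (t \<otimes> b')) (s3 \<otimes> t')" using fmul_cls[OF h(4,5,7,8) _ tb'(1) e] tb tb' sc h by auto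
  have e2: "(a2 \<otimes> (t \<otimes> b')) \<otimes> \<one> = s1 \<otimes> (b \<otimes> b')"
  proof -
    have "(a2 \<otimes> (t \<otimes> b')) \<otimes> \<one> = (a2 \<otimes> t) \<otimes> b'" using h(4) sc tb(2) tb'(2) by (simp add: m_assoc)
    also have "\<dots> = (s1 \<otimes> b) \<otimes> b'" using tb(3) by simp
    also have "\<dots> = s1 \<otimes> (b \<otimes> b')" using h sc tb(2) tb'(2) by (simp add: m_assoc)
    finally show ?thesis .
  qed
  have "fmul x (fmul y z) = cls (a1 \<otimes> (b \<otimes> b')) ((s3 \<otimes> t') \<otimes> \<one>)"
    unfolding yz using fmul_cls[of a1 s1 "a2 \<otimes> (t \<otimes> b')" "s3 \<otimes> t'" "b \<otimes> b'" \<one>, OF _ _ _ _ _ _ e2]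
      h tb tb' sc mult_S one_S by auto
  then show "(x \<otimes>\<^bsub>Loc\<^esub> y) \<otimes>\<^bsub>Loc\<^esub> z = x \<otimes>\<^bsub>Loc\<^esub> (y \<otimes>\<^bsub>Loc\<^esub> z)"
    using xyz h tb tb' sc by (simp add: m_assoc)
next
  fix x assume "x \<in> carrier Loc"
  then obtain a s where h: "a \<in> carrier R" "s \<in> S" "x = cls a s" by (metis LocE)
  show "\<one>\<^bsub>Loc\<^esub> \<otimes>\<^bsub>Loc\<^esub> x = x" using h fmul_one_l by simp
  show "x \<otimes>\<^bsub>Loc\<^esub> \<one>\<^bsub>Loc\<^esub> = x" using h fmul_one_r by simp
qed

lemma Loc_ring: "ring Loc"
proof (rule ringI[OF Loc_abelian Loc_monoid])
  fix x y z assume "x \<in> carrier Loc" "y \<in> carrier Loc" "z \<in> carrier Loc"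
  then obtain a1 s1 a2 s2 a3 s3 where h: "a1 \<in> carrier R" "s1 \<in> S" "x = cls a1 s1" "a2 \<in> carrier R" "s2 \<in> S" "y = cls a2 s2"
    "a3 \<in> carrier R" "s3 \<in> S" "z = cls a3 s3" by (metis LocE)
  obtain D x1 x2 where c: "D \<in> S" "x1 \<in> carrier R" "x2 \<in> carrier R" "x = cls x1 D" "y = cls x2 D"
    using common2[OF h(2,5,1,4)] h by metis
  have Dc: "D \<in> carrier R" "s3 \<in> carrier R" using c h Sc by auto
  obtain t b where tb: "t \<in> S" "b \<in> carrier R" "a3 \<otimes> t = D \<otimes> b" using ore[OF h(7) c(1)] by blast
  have "fmul (fadd x y) z = cls ((x1 \<oplus> x2) \<otimes> b) (s3 \<otimes> t)"
    using c h fadd_same fmul_cls[of "x1 \<oplus> x2" D a3 s3 b t] tb by auto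
  moreover have "fadd (fmul x z) (fmul y z) = cls (x1 \<otimes> b \<oplus> x2 \<otimes> b) (s3 \<otimes> t)"
    using c h fmul_cls[of x1 D a3 s3 b t] fmul_cls[of x2 D a3 s3 b t] tb fadd_same mult_S by auto
  ultimately show "(x \<oplus>\<^bsub>Loc\<^esub> y) \<otimes>\<^bsub>Loc\<^esub> z = x \<otimes>\<^bsub>Loc\<^esub> z \<oplus>\<^bsub>Loc\<^esub> y \<otimes>\<^bsub>Loc\<^esub> z"
    using c tb by (simp add: l_distr)
  obtain t1 b1 where tb1: "t1 \<in> S" "b1 \<in> carrier R" "x1 \<otimes> t1 = s3 \<otimes> b1" using ore[OF c(2) h(8)] by blast
  have t1c: "t1 \<in> carrier R" using tb1 Sc by auto
  have x2t: "x2 \<otimes> t1 \<in> carrier R" using c t1c by auto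
  obtain t2 b2 where tb2: "t2 \<in> S" "b2 \<in> carrier R" "(x2 \<otimes> t1) \<otimes> t2 = s3 \<otimes> b2" using ore[OF x2t h(8)] by blast
  have t2c: "t2 \<in> carrier R" using tb2 Sc by auto
  have T: "t1 \<otimes> t2 \<in> S" using mult_S tb1 tb2 by auto
  have e1: "x1 \<otimes> (t1 \<otimes> t2) = s3 \<otimes> (b1 \<otimes> t2)" using tb1 c t1c t2c Dc by (simp add: m_assoc[symmetric])
  have e2: "x2 \<otimes> (t1 \<otimes> t2) = s3 \<otimes> b2" using tb2 c t1c t2c Dc by (simp add: m_assoc)
  have e3: "(x1 \<oplus> x2) \<otimes> (t1 \<otimes> t2) = s3 \<otimes> (b1 \<otimes> t2 \<oplus> b2)"
    using e1 e2 c t1c t2c Dc tb1 tb2 by (simp add: l_distr r_distr)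
  have "fmul z (fadd x y) = cls (a3 \<otimes> (b1 \<otimes> t2 \<oplus> b2)) (D \<otimes> (t1 \<otimes> t2))"
    using c h fadd_same fmul_cls[of a3 s3 "x1 \<oplus> x2" D "b1 \<otimes> t2 \<oplus> b2" "t1 \<otimes> t2", OF _ _ _ _ _ T e3] tb1 tb2 t2c by auto
  moreover have "fmul z x = cls (a3 \<otimes> (b1 \<otimes> t2)) (D \<otimes> (t1 \<otimes> t2))"
    using c h fmul_cls[of a3 s3 x1 D "b1 \<otimes> t2" "t1 \<otimes> t2", OF _ _ _ _ _ T e1] tb1 t2c by auto
  moreover have "fmul z y = cls (a3 \<otimes> b2) (D \<otimes> (t1 \<otimes> t2))"
    using c h fmul_cls[of a3 s3 x2 D b2 "t1 \<otimes> t2", OF _ _ _ _ _ T e2] tb2 by auto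
  ultimately show "z \<otimes>\<^bsub>Loc\<^esub> (x \<oplus>\<^bsub>Loc\<^esub> y) = z \<otimes>\<^bsub>Loc\<^esub> x \<oplus>\<^bsub>Loc\<^esub> z \<otimes>\<^bsub>Loc\<^esub> y"
    using c h tb1 tb2 t2c T mult_S fadd_same by (simp add: r_distr)
qed

lemma Loc_module: "module C_ring Loc"
proof (rule moduleI)
  show "cring C_ring" using modR unfolding module_def by auto
  show "abelian_group Loc" by (rule Loc_abelian)
next
  fix a x assume "a \<in> carrier C_ring" "x \<in> carrier Loc"
  then obtain z s where h: "z \<in> carrier R" "s \<in> S" "x = cls z s" by (metis LocE)
  then show "a \<odot>\<^bsub>Loc\<^esub> x \<in> carrier Loc" using fsm_cls sm_closed cls_in[of "a \<odot>\<^bsub>R\<^esub> z" s] by simp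
next
  fix a b x assume "a \<in> carrier C_ring" "b \<in> carrier C_ring" "x \<in> carrier Loc"
  then obtain z s where h: "z \<in> carrier R" "s \<in> S" "x = cls z s" by (metis LocE)
  have "(a + b) \<odot>\<^bsub>R\<^esub> z = a \<odot>\<^bsub>R\<^esub> z \<oplus> b \<odot>\<^bsub>R\<^esub> z" using module.smult_l_distr[OF modR, of a b z] h by simp
  then show "(a \<oplus>\<^bsub>C_ring\<^esub> b) \<odot>\<^bsub>Loc\<^esub> x = a \<odot>\<^bsub>Loc\<^esub> x \<oplus>\<^bsub>Loc\<^esub> b \<odot>\<^bsub>Loc\<^esub> x"
    using h fsm_cls fadd_same sm_closed by simp
next
  fix a x y assume "a \<in> carrier C_ring" "x \<in> carrier Loc" "y \<in> carrier Loc"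
  then obtain a1 s1 a2 s2 where h: "a1 \<in> carrier R" "s1 \<in> S" "x = cls a1 s1" "a2 \<in> carrier R" "s2 \<in> S" "y = cls a2 s2"
    by (metis LocE)
  obtain D x1 x2 where c: "D \<in> S" "x1 \<in> carrier R" "x2 \<in> carrier R" "x = cls x1 D" "y = cls x2 D"
    using common2[OF h(2,5,1,4)] h by metis
  have "a \<odot>\<^bsub>R\<^esub> (x1 \<oplus> x2) = a \<odot>\<^bsub>R\<^esub> x1 \<oplus> a \<odot>\<^bsub>R\<^esub> x2" using module.smult_r_distr[OF modR, of a x1 x2] c by simp
  then show "a \<odot>\<^bsub>Loc\<^esub> (x \<oplus>\<^bsub>Loc\<^esub> y) = a \<odot>\<^bsub>Loc\<^esub> x \<oplus>\<^bsub>Loc\<^esub> a \<odot>\<^bsub>Loc\<^esub> y"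
    using c fsm_cls fadd_same sm_closed by simp
next
  fix a b x assume "a \<in> carrier C_ring" "b \<in> carrier C_ring" "x \<in> carrier Loc"
  then obtain z s where h: "z \<in> carrier R" "s \<in> S" "x = cls z s" by (metis LocE)
  have "(a * b) \<odot>\<^bsub>R\<^esub> z = a \<odot>\<^bsub>R\<^esub> (b \<odot>\<^bsub>R\<^esub> z)" using module.smult_assoc1[OF modR, of a b z] h by simp
  then show "(a \<otimes>\<^bsub>C_ring\<^esub> b) \<odot>\<^bsub>Loc\<^esub> x = a \<odot>\<^bsub>Loc\<^esub> (b \<odot>\<^bsub>Loc\<^esub> x)"
    using h fsm_cls sm_closed by simp
next
  fix x assume "x \<in> carrier Loc"
  then obtain z s where h: "z \<in> carrier R" "s \<in> S" "x = cls z s" by (metis LocE)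
  have "1 \<odot>\<^bsub>R\<^esub> z = z" using module.smult_one[OF modR, of z] h by simp
  then show "\<one>\<^bsub>C_ring\<^esub> \<odot>\<^bsub>Loc\<^esub> x = x" using h fsm_cls by simp
qed

lemma Loc_cx: "cx_algebra Loc"
  unfolding cx_algebra_def
proof (intro conjI allI impI)
  show "ring Loc" by (rule Loc_ring)
  show "module C_ring Loc" by (rule Loc_module)
  fix c x y assume "x \<in> carrier Loc" "y \<in> carrier Loc"
  then obtain a s a' s' where h: "a \<in> carrier R" "s \<in> S" "x = cls a s" "a' \<in> carrier R" "s' \<in> S" "y = cls a' s'"
    by (metis LocE)
  obtain t b where tb: "t \<in> S" "b \<in> carrier R" "a' \<otimes> t = s \<otimes> b" using ore[OF h(4,2)] by blast
  have tc: "t \<in> carrier R" "s \<in> carrier R" using tb h Sc by auto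
  have "fmul (fsm c x) y = cls ((c \<odot>\<^bsub>R\<^esub> a) \<otimes> b) (s' \<otimes> t)"
    using h fsm_cls fmul_cls[of "c \<odot>\<^bsub>R\<^esub> a" s a' s' b t] tb sm_closed by auto
  moreover have "fsm c (fmul x y) = cls (c \<odot>\<^bsub>R\<^esub> (a \<otimes> b)) (s' \<otimes> t)"
    using h fsm_cls fmul_cls[of a s a' s' b t] tb mult_S by auto
  ultimately show "(c \<odot>\<^bsub>Loc\<^esub> x) \<otimes>\<^bsub>Loc\<^esub> y = c \<odot>\<^bsub>Loc\<^esub> (x \<otimes>\<^bsub>Loc\<^esub> y)"
    using h tb by (simp add: sm_l)
  have e: "(c \<odot>\<^bsub>R\<^esub> a') \<otimes> t = s \<otimes> (c \<odot>\<^bsub>R\<^esub> b)" using tb h tc by (simp add: sm_l sm_r)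
  have "fmul x (fsm c y) = cls (a \<otimes> (c \<odot>\<^bsub>R\<^esub> b)) (s' \<otimes> t)"
    using h fsm_cls fmul_cls[of a s "c \<odot>\<^bsub>R\<^esub> a'" s' "c \<odot>\<^bsub>R\<^esub> b" t, OF _ _ _ _ _ _ e] tb sm_closed by auto
  moreover have "fsm c (fmul x y) = cls (c \<odot>\<^bsub>R\<^esub> (a \<otimes> b)) (s' \<otimes> t)"
    using h fsm_cls fmul_cls[of a s a' s' b t] tb mult_S by auto
  ultimately show "x \<otimes>\<^bsub>Loc\<^esub> (c \<odot>\<^bsub>Loc\<^esub> y) = c \<odot>\<^bsub>Loc\<^esub> (x \<otimes>\<^bsub>Loc\<^esub> y)"
    using h tb by (simp add: sm_r)
qed

definition phi :: "'a \<Rightarrow> ('a \<times> 'a) set" where "phi a = cls a \<one>"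

lemma phi_hom: "phi \<in> ring_hom R Loc"
proof (rule ring_hom_memI)
  fix x assume "x \<in> carrier R" then show "phi x \<in> carrier Loc" unfolding phi_def using cls_in one_S by simp
next
  fix x y assume h: "x \<in> carrier R" "y \<in> carrier R"
  show "phi (x \<otimes> y) = phi x \<otimes>\<^bsub>Loc\<^esub> phi y" unfolding phi_def
    using fmul_cls[of x \<one> y \<one> y \<one>] h one_S by simp
  show "phi (x \<oplus> y) = phi x \<oplus>\<^bsub>Loc\<^esub> phi y" unfolding phi_def using fadd_same h one_S by simp
next
  show "phi \<one> = \<one>\<^bsub>Loc\<^esub>" unfolding phi_def by simp
qed

lemma phi_unit: assumes "s \<in> S" shows "phi s \<in> Units Loc" and "inv\<^bsub>Loc\<^esub> (phi s) = cls \<one> s"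
proof -
  have sc: "s \<in> carrier R" using assms Sc by auto
  have 1: "fmul (cls s \<one>) (cls \<one> s) = \<one>\<^bsub>Loc\<^esub>"
  proof -
    have "fmul (cls s \<one>) (cls \<one> s) = cls (s \<otimes> \<one>) (s \<otimes> \<one>)"
      using fmul_cls[of s \<one> \<one> s \<one> \<one>] sc assms one_S by simp
    also have "\<dots> = cls \<one> \<one>" using cls_expand[of \<one> \<one> s] sc assms one_S by simp
    finally show ?thesis by simp
  qed
  have 2: "fmul (cls \<one> s) (cls s \<one>) = \<one>\<^bsub>Loc\<^esub>"
    using fmul_cls[of \<one> s s \<one> \<one> \<one>] sc assms one_S by simp
  have c: "cls s \<one> \<in> carrier Loc" "cls \<one> s \<in> carrier Loc" using cls_in sc assms one_S by auto
  show "phi s \<in> Units Loc" unfolding phi_def Units_def using 1 2 c by auto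
  show "inv\<^bsub>Loc\<^esub> (phi s) = cls \<one> s" unfolding phi_def
    using monoid.inv_char[OF Loc_monoid c] 1 2 by simp
qed

lemma Loc_is_ore: "ore_localization R S Loc phi"
  unfolding ore_localization_def
proof (intro conjI ballI allI)
  show "cx_algebra Loc" by (rule Loc_cx)
  show "phi \<in> ring_hom R Loc" by (rule phi_hom)
  fix c x assume "x \<in> carrier R" then show "phi (c \<odot>\<^bsub>R\<^esub> x) = c \<odot>\<^bsub>Loc\<^esub> phi x"
    unfolding phi_def using fsm_cls one_S by simp
next
  fix s assume "s \<in> S" then show "phi s \<in> Units Loc" by (rule phi_unit)
next
  fix y assume "y \<in> carrier Loc"
  then obtain a s where h: "a \<in> carrier R" "s \<in> S" "y = cls a s" by (metis LocE)
  have "phi a \<otimes>\<^bsub>Loc\<^esub> inv\<^bsub>Loc\<^esub> (phi s) = cls a s"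
    using phi_unit(2)[OF h(2)] fmul_cls[of a \<one> \<one> s \<one> \<one>] h one_S Sc unfolding phi_def by simp
  then show "\<exists>a\<in>carrier R. \<exists>s\<in>S. y = phi a \<otimes>\<^bsub>Loc\<^esub> inv\<^bsub>Loc\<^esub> (phi s)" using h by metis
next
  fix a assume a: "a \<in> carrier R"
  have "phi a = \<zero>\<^bsub>Loc\<^esub> \<longleftrightarrow> equ (a,\<one>) (\<zero>,\<one>)" unfolding phi_def using cls_eq_iff a one_S by simp
  also have "\<dots> \<longleftrightarrow> (\<exists>s\<in>S. a \<otimes> s = \<zero>)"
  proof
    assume "equ (a,\<one>) (\<zero>,\<one>)"
    then obtain b b' where "b \<in> carrier R" "b' \<in> carrier R" "\<one> \<otimes> b = \<one> \<otimes> b'" "\<one> \<otimes> b \<in> S" "a \<otimes> b = \<zero> \<otimes> b'"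
      unfolding equ_def by auto
    then show "\<exists>s\<in>S. a \<otimes> s = \<zero>" by auto
  next
    assume "\<exists>s\<in>S. a \<otimes> s = \<zero>"
    then obtain s where "s \<in> S" "a \<otimes> s = \<zero>" by blast
    then show "equ (a,\<one>) (\<zero>,\<one>)" unfolding equ_def using Sc by (intro bexI[of _ s]) auto
  qed
  finally show "phi a = \<zero>\<^bsub>Loc\<^esub> \<longleftrightarrow> (\<exists>s\<in>S. a \<otimes> s = \<zero>)" .
qed

end


theorem proposition2p5:
  fixes A :: "(complex, 'a) module" and Sbar :: "'a set set"
  assumes "cx_algebra A" and "fg_algebra A" and "nc_nilpotent A"
    and "Sbar \<subseteq> carrier (A Quot Mc A 2)"
    and "fg_mult_set (A Quot Mc A 2) Sbar"
    and "no_zero_divisors_in (A Quot Mc A 2) Sbar"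
  shows "right_ore A {a \<in> carrier A. Mc A 2 +>\<^bsub>A\<^esub> a \<in> Sbar}
    \<and> (\<exists>(B :: (complex, ('a \<times> 'a) set) module) \<phi>.
          ore_localization A {a \<in> carrier A. Mc A 2 +>\<^bsub>A\<^esub> a \<in> Sbar} B \<phi>)
    \<and> (\<forall>(B :: (complex, 'b) module) \<phi>.
          ore_localization A {a \<in> carrier A. Mc A 2 +>\<^bsub>A\<^esub> a \<in> Sbar} B \<phi>
          \<longrightarrow> fg_algebra B \<and> nc_nilpotent B)"
proof -
  interpret cxa A using assms(1) unfolding cx_algebra_def by (simp add: cxa_def cxa_axioms_def assms(1))
  obtain N where FN: "NCF A N = {\<zero>\<^bsub>A\<^esub>}" using assms(3) unfolding nc_nilpotent_def by blast
  interpret cxa_nil A N using FN by (simp add: cxa_nil_def cxa_nil_axioms_def cxa_axioms)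
  define S where "S = {a \<in> carrier A. Mc A 2 +>\<^bsub>A\<^esub> a \<in> Sbar}"
  interpret I: ideal "Mc A 2" A by (rule Mc_is_ideal)

  have Qr: "ring (A Quot Mc A 2)" by (rule I.quotient_is_ring)
  have Qm: "monoid (A Quot Mc A 2)" using Qr ring.is_monoid by blast
  obtain GQ where GQ: "finite GQ" "GQ \<subseteq> carrier (A Quot Mc A 2)" "Sbar = {lprod (A Quot Mc A 2) xs | xs. set xs \<subseteq> GQ}"
    using assms(5) unfolding fg_mult_set_def by blast
  have Ssub: "S \<subseteq> carrier A" unfolding S_def by auto
  have oneS: "\<one>\<^bsub>A\<^esub> \<in> S"
  proof -
    have "lprod (A Quot Mc A 2) [] \<in> Sbar" using GQ by auto
    then show ?thesis unfolding S_def by (simp add: lprod_def FactRing_def)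
  qed
  have Sbar_mult: "Xq \<in> Sbar \<Longrightarrow> Yq \<in> Sbar \<Longrightarrow> Xq \<otimes>\<^bsub>(A Quot Mc A 2)\<^esub> Yq \<in> Sbar" for Xq Yq
  proof -
    assume "Xq \<in> Sbar" "Yq \<in> Sbar"
    then obtain xs ys where "Xq = lprod (A Quot Mc A 2) xs" "Yq = lprod (A Quot Mc A 2) ys" "set xs \<subseteq> GQ" "set ys \<subseteq> GQ" using GQ by auto
    then show ?thesis using lprod_append_m[OF Qm, of xs ys] GQ by (auto intro!: exI[of _ "xs @ ys"])
  qed
  have multS: "s \<in> S \<Longrightarrow> t \<in> S \<Longrightarrow> s \<otimes>\<^bsub>A\<^esub> t \<in> S" for s t
  proof -
    assume h: "s \<in> S" "t \<in> S"
    have "Mc A 2 +>\<^bsub>A\<^esub> (s \<otimes>\<^bsub>A\<^esub> t) = (Mc A 2 +>\<^bsub>A\<^esub> s) \<otimes>\<^bsub>(A Quot Mc A 2)\<^esub> (Mc A 2 +>\<^bsub>A\<^esub> t)"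
      using h I.rcoset_mult_add unfolding S_def by (simp add: FactRing_def)
    then show ?thesis using h Sbar_mult unfolding S_def by auto
  qed
  have powS: "s \<in> S \<Longrightarrow> s [^]\<^bsub>A\<^esub> (n::nat) \<in> S" for s n by (induction n) (auto simp: oneS multS)
  have oreS: "\<exists>t\<in>S. \<exists>b\<in>carrier A. a \<otimes>\<^bsub>A\<^esub> t = s \<otimes>\<^bsub>A\<^esub> b" if as: "a \<in> carrier A" "s \<in> S" for a s
  proof -
    have "s \<in> carrier A" using as Ssub by auto
    then obtain b where "b \<in> carrier A" "a \<otimes>\<^bsub>A\<^esub> s [^]\<^bsub>A\<^esub> N = s \<otimes>\<^bsub>A\<^esub> b" using oreJ[OF idl_carrier as(1)] by blast
    then show ?thesis using powS as by blast
  qed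
  have revS: "\<exists>t\<in>S. a \<otimes>\<^bsub>A\<^esub> t = \<zero>\<^bsub>A\<^esub>" if "s \<in> S" "a \<in> carrier A" "s \<otimes>\<^bsub>A\<^esub> a = \<zero>\<^bsub>A\<^esub>" for s a
  proof -
    have "s \<in> carrier A" using that Ssub by auto
    then show ?thesis using revN[of s a] that powS by blast
  qed
  interpret O: ore A S
    by (unfold_locales) (use Ssub oneS multS oreS revS assms(1) in auto)
  have P1: "right_ore A S" unfolding right_ore_def using oreS by blast
  have P2: "\<exists>(B :: (complex, ('a \<times> 'a) set) module) \<phi>. ore_localization A S B \<phi>"
    using O.Loc_is_ore by blast
  have P3: "fg_algebra B \<and> nc_nilpotent B" if loc: "ore_localization A S (B :: (complex, 'b) module) \<phi>" for B \<phi>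
  proof -
    interpret L: locB A N S B \<phi>
      by (unfold_locales) (use loc Ssub oneS multS in auto)
    define lift where "lift Xq = (SOME a. a \<in> carrier A \<and> Xq = Mc A 2 +>\<^bsub>A\<^esub> a)" for Xq
    have lift: "lift Xq \<in> carrier A \<and> Xq = Mc A 2 +>\<^bsub>A\<^esub> lift Xq" if "Xq \<in> carrier (A Quot Mc A 2)" for Xq
    proof -
      have "\<exists>a. a \<in> carrier A \<and> Xq = Mc A 2 +>\<^bsub>A\<^esub> a" using that unfolding FactRing_def A_RCOSETS_def' by auto
      then show ?thesis unfolding lift_def by (rule someI_ex)
    qed
    define H where "H = lift ` GQ"
    have Hf: "finite H" using GQ H_def by auto
    have HS: "H \<subseteq> S"
    proof
      fix h assume "h \<in> H"
      then obtain Xq where Xq: "Xq \<in> GQ" "h = lift Xq" using H_def by auto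
      have XQ: "Xq \<in> carrier (A Quot Mc A 2)" using Xq GQ by auto
      have "lprod (A Quot Mc A 2) [Xq] \<in> Sbar" using GQ Xq by auto
      moreover have "lprod (A Quot Mc A 2) [Xq] = Xq" using XQ Qm by (simp add: lprod_def monoid.r_one)
      ultimately show "h \<in> S" using lift[OF XQ] Xq unfolding S_def by auto
    qed
    have dec: "\<forall>s\<in>S. \<exists>hs m. set hs \<subseteq> H \<and> m \<in> NCF A 1 \<and> s = m \<oplus>\<^bsub>A\<^esub> lprod A hs"
    proof
      fix s assume s: "s \<in> S"
      then obtain xs where xs: "Mc A 2 +>\<^bsub>A\<^esub> s = lprod (A Quot Mc A 2) xs" "set xs \<subseteq> GQ" using GQ unfolding S_def by auto
      define hs where "hs = map lift xs"
      have hsH: "set hs \<subseteq> H" unfolding hs_def H_def using xs by auto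
      have hsc: "set hs \<subseteq> carrier A" using hsH HS Ssub by auto
      have "Mc A 2 +>\<^bsub>A\<^esub> lprod A hs = lprod (A Quot Mc A 2) (map (\<lambda>a. Mc A 2 +>\<^bsub>A\<^esub> a) hs)"
        using lprod_hom[OF I.rcos_ring_hom is_monoid hsc] .
      also have "map (\<lambda>a. Mc A 2 +>\<^bsub>A\<^esub> a) hs = xs" unfolding hs_def
        using xs(2) GQ lift by (auto intro!: map_idI)
      finally have e: "Mc A 2 +>\<^bsub>A\<^esub> s = Mc A 2 +>\<^bsub>A\<^esub> lprod A hs" using xs by simp
      have sc: "s \<in> carrier A" using s Ssub by auto
      have "s \<in> Mc A 2 +>\<^bsub>A\<^esub> lprod A hs" using I.a_rcos_self[OF sc] e by simp
      then obtain m where m: "m \<in> Mc A 2" "s = m \<oplus>\<^bsub>A\<^esub> lprod A hs" unfolding a_r_coset_def' by auto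
      then show "\<exists>hs m. set hs \<subseteq> H \<and> m \<in> NCF A 1 \<and> s = m \<oplus>\<^bsub>A\<^esub> lprod A hs" using hsH M2_F1 by blast
    qed
    show ?thesis using L.nilB L.fgB[OF assms(2) Hf HS dec] by simp
  qed
  show ?thesis using P1 P2 P3 unfolding S_def by blast
qed


end
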